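(* Assume the setting of the context. The family $(Q_x)_{x\in\Gamma(u)}$ is locally finite in $\tilde L$: every point of $\tilde L$ has a neighbourhood meeting $Q_x$ for only finitely many $x\in\Gamma(u)$.
   Context: Let $\tilde L=\{(z,\alpha,r)\in\mathbb C\times\mathbb R\times\mathbb R_{>0} : |z|<r\}$, $L=\{(z,w)\in\mathbb C^2: |z|<|w|\}$, and $\pi:\tilde L\to L$, $\pi(z,\alpha,r)=(z,re^{i\alpha})$ (a universal covering). Equip $\mathbb C^2$ with the real symmetric bilinear form $\langle (z_1,w_1),(z_2,w_2)\rangle=\mathrm{Re}(z_1\bar z_2-w_1\bar w_2)$. Let $G=\{(z,w):|z|^2-|w|^2=-1\}\subset L$, identified with $\mathrm{SU}(1,1)$ via $\begin{pmatrix} w&z\\ \bar z&\bar w\end{pmatrix}\mapsto (z,\bar w)$; left multiplication by $g\leftrightarrow(z_g,\bar w_g)$ extends to the $\mathbb R$-linear isometry $(z,v)\mapsto (w_g z+z_g v,\ \bar z_g z+\bar w_g v)$ of $\mathbb C^2$ preserving $L$. Let $\tilde G=\{(z,\alpha,r)\in\tilde L: |z|^2=r^2-1\}=\pi^{-1}(G)$, the universal cover $\widetilde{\mathrm{SU}}(1,1)$ with identity $e=(0,0,1)$; the left action of $G$ on $L$ lifts to a left action of $\tilde G$ on $\tilde L$ extending left multiplication on $\tilde G$. Elements of $\tilde G$ act on the unit disk $\mathbb D$ through $\mathrm{PSU}(1,1)$: $(z,\alpha,r)$ with $w=re^{-i\alpha}$ acts by $\zeta\mapsto (w\zeta+z)/(\bar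 z\zeta+\bar w)$. For $g\in\tilde G$ with $\bar g=\pi(g)$, let $\bar I_{\bar g}=\{a\in L:\langle \bar g,a\rangle\le -1\}$, $\bar E_{\bar g}=\{a\in L:\langle\bar g,a\rangle=-1\}$; let $I_g$, $E_g$ be the connected components of $\pi^{-1}(\bar I_{\bar g})$, $\pi^{-1}(\bar E_{\bar g})$ containing $g$; $E_g$ separates $\tilde L$ into two components, the closure of one being $I_g$; let $H_g$ be the closure of the other (so $\partial H_g=E_g$). Let $\Gamma\subset\tilde G$ be a discrete subgroup of finite level $k$ (the index of $\Gamma\cap Z$ in the infinite cyclic centre $Z$ of $\tilde G$), let $\bar\Gamma$ be its image in $\mathrm{PSU}(1,1)$, and let $u\in\mathbb D$ be a point fixed by a nontrivial element of $\bar\Gamma$, with isotropy group $\bar\Gamma_u$ of order $p$. Assume $p>k$ and (after conjugation) $u=0$. Put $\vartheta=\pi k/p$. For $x$ in the orbit $\Gamma(u)$ let $T(x)=\{g\in\Gamma: g(u)=x\}$ and $Q_x=\bigcap_{g\in T(x)}H_g$. *)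

theory Defs
  imports "HOL-Analysis.Analysis"
begin

text \<open>Points of the universal cover are triples (z, alpha, r).\<close>

definition Lt :: "(complex \<times> real \<times> real) set" where
  "Lt = {(z, a, r). 0 < r \<and> cmod z < r}"

definition Lset :: "(complex \<times> complex) set" where
  "Lset = {(z, w). cmod z < cmod w}"

definition proj :: "complex \<times> real \<times> real \<Rightarrow> complex \<times> complex" where
  "proj = (\<lambda>(z, a, r). (z, complex_of_real r * cis a))"

definition form :: "complex \<times> complex \<Rightarrow> complex \<times> complex \<Rightarrow> real" where
  "form = (\<lambda>(z1, w1) (z2, w2). Re (z1 * cnj z2 - w1 * cnj w2))"

definition Gt :: "(complex \<times> real \<times> real) set" where
  "Gt = {(z, a, r) \<in> Lt. (cmod z)\<^sup>2 = r\<^sup>2 - 1}"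

definition unitG :: "complex \<times> real \<times> real" where
  "unitG = (0, 0, 1)"

text \<open>The lifted (continuous, identity at unitG) left action of Gt on Lt; restricted
  to Gt it is the group multiplication of the universal cover of SU(1,1).
  Left multiplication by g downstairs is (z,v) |-> (w_g z + z_g v, cnj z_g z + cnj w_g v)
  with w_g = r_g e^{-i alpha_g}; the angle is lifted continuously via the principal
  argument of a number of positive real part.\<close>
definition tact :: "complex \<times> real \<times> real \<Rightarrow> complex \<times> real \<times> real \<Rightarrow> complex \<times> real \<times> real" where
  "tact = (\<lambda>(zg, ag, rg) (z, b, s).
     (let wg = complex_of_real rg * cis (- ag);
          v = complex_of_real s * cis b;
          z' = wg * z + zg * v;
          v' = cnj zg * z + cnj wg * v
      in (z', ag + b + Arg (v' / (complex_of_real (rg * s) * cis (ag + b))), cmod v')))"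

definition centre :: "(complex \<times> real \<times> real) set" where
  "centre = {c \<in> Gt. \<forall>g\<in>Gt. tact c g = tact g c}"

definition discrete_subgroup :: "(complex \<times> real \<times> real) set \<Rightarrow> bool" where
  "discrete_subgroup \<Gamma> \<longleftrightarrow> \<Gamma> \<subseteq> Gt \<and> unitG \<in> \<Gamma> \<and>
     (\<forall>g\<in>\<Gamma>. \<forall>h\<in>\<Gamma>. tact g h \<in> \<Gamma>) \<and> (\<forall>g\<in>\<Gamma>. \<exists>h\<in>\<Gamma>. tact g h = unitG) \<and>
     (\<forall>g\<in>\<Gamma>. \<exists>\<epsilon>>0. \<forall>h\<in>\<Gamma>. dist h g < \<epsilon> \<longrightarrow> h = g)"

text \<open>Level: the index of Gamma \<inter> Z in the centre Z (number of cosets; 0 if infinite).\<close>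
definition level :: "(complex \<times> real \<times> real) set \<Rightarrow> nat" where
  "level \<Gamma> = card {(\<lambda>h. tact c h) ` (\<Gamma> \<inter> centre) | c. c \<in> centre}"

text \<open>Action on the unit disk through PSU(1,1), restricted to the disk.\<close>
definition moeb :: "complex \<times> real \<times> real \<Rightarrow> complex \<Rightarrow> complex" where
  "moeb = (\<lambda>(z, a, r) \<zeta>. if cmod \<zeta> < 1 then
      (let w = complex_of_real r * cis (- a) in (w * \<zeta> + z) / (cnj z * \<zeta> + cnj w))
    else 0)"

definition Ibar :: "complex \<times> real \<times> real \<Rightarrow> (complex \<times> complex) set" where
  "Ibar g = {a \<in> Lset. form (proj g) a \<le> -1}"

definition Ebar :: "complex \<times> real \<times> real \<Rightarrow> (complex \<times> complex) set" where
  "Ebar g = {a \<in> Lset. form (proj g) a = -1}"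

definition Ig :: "complex \<times> real \<times> real \<Rightarrow> (complex \<times> real \<times> real) set" where
  "Ig g = connected_component_set (Lt \<inter> proj -` Ibar g) g"

definition Eg :: "complex \<times> real \<times> real \<Rightarrow> (complex \<times> real \<times> real) set" where
  "Eg g = connected_component_set (Lt \<inter> proj -` Ebar g) g"

definition Hg :: "complex \<times> real \<times> real \<Rightarrow> (complex \<times> real \<times> real) set" where
  "Hg g = Lt \<inter> closure (\<Union>{C \<in> components (Lt - Eg g). Lt \<inter> closure C \<noteq> Ig g})"

definition Tset :: "(complex \<times> real \<times> real) set \<Rightarrow> complex \<Rightarrow> complex \<Rightarrow> (complex \<times> real \<times> real) set" where
  "Tset \<Gamma> u x = {g \<in> \<Gamma>. moeb g u = x}"

definition Qset :: "(complex \<times> real \<times> real) set \<Rightarrow> complex \<Rightarrow> complex \<Rightarrow> (complex \<times> real \<times> real) set" where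
  "Qset \<Gamma> u x = (\<Inter>g\<in>Tset \<Gamma> u x. Hg g)"

end

theory Submission
  imports Defs
begin


lemma tact_eq:
  "tact (zg, ag, rg) (z, b, s) =
    (complex_of_real rg * cis (- ag) * z + zg * (complex_of_real s * cis b),
     ag + b + Arg ((cnj zg * z + complex_of_real rg * cis ag * (complex_of_real s * cis b)) / (complex_of_real (rg * s) * cis (ag + b))),
     cmod (cnj zg * z + complex_of_real rg * cis ag * (complex_of_real s * cis b)))"
  by (simp add: tact_def Let_def cis_cnj)

lemma herm_gen:
  fixes w zg z v :: complex
  shows "(cnj zg * z + cnj w * v) * cnj (cnj zg * z + cnj w * v) - (w*z + zg * v) * cnj (w*z+zg * v)
     = (w * cnj w - zg * cnj zg) * (v * cnj v - z * cnj z)"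
  by (simp add: algebra_simps)

lemma normsq: "complex_of_real ((cmod z)^2) = z * cnj z"
  by (rule complex_norm_square)

lemma herm_norm:
  fixes w zg z v :: complex
  assumes "(cmod w)^2 - (cmod zg)^2 = 1"
  shows "(cmod (cnj zg * z + cnj w * v))^2 - (cmod (w*z + zg * v))^2 = (cmod v)^2 - (cmod z)^2"
proof -
  have "complex_of_real ((cmod (cnj zg * z + cnj w * v))^2 - (cmod (w*z + zg * v))^2)
       = complex_of_real (((cmod w)^2 - (cmod zg)^2) * ((cmod v)^2 - (cmod z)^2))"
    unfolding of_real_diff of_real_mult normsq by (rule herm_gen)
  then show ?thesis using assms by (metis mult_1 of_real_eq_iff)
qed

lemma ratio_Re_pos:
  assumes "0 < rg" "cmod zg < rg" "0 < s" "cmod z < s"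
  shows "0 < Re ((cnj zg * z + complex_of_real rg * cis ag * (complex_of_real s * cis b)) / (complex_of_real (rg * s) * cis (ag + b)))"
proof -
  define q where "q = cnj zg * z / (complex_of_real (rg * s) * cis (ag + b))"
  have c: "cis ag * cis b = cis (ag+b)" by (simp add: cis_mult)
  have ne: "complex_of_real (rg * s) * cis (ag + b) \<noteq> 0" using assms by simp
  have eq: "(cnj zg * z + complex_of_real rg * cis ag * (complex_of_real s * cis b)) / (complex_of_real (rg * s) * cis (ag + b)) = 1 + q"
    unfolding q_def using ne c by (simp add: field_simps)
  have "cmod q = cmod zg * cmod z / (rg * s)" unfolding q_def using assms by (simp add: norm_mult norm_divide)
  also have "\<dots> < 1" using assms by (simp add: mult_strict_mono divide_less_eq norm_ge_zero)
  finally have "cmod q < 1" .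
  moreover have "- Re q \<le> cmod q" by (metis abs_Re_le_cmod abs_le_iff)
  ultimately show ?thesis unfolding eq by simp
qed

definition ginv :: "complex \<times> real \<times> real \<Rightarrow> complex \<times> real \<times> real" where
  "ginv g = (case g of (z, a, r) \<Rightarrow> (-z, -a, r))"

lemma ginv_simp [simp]: "ginv (z, a, r) = (-z, -a, r)" by (simp add: ginv_def)

lemma Lt_iff: "(z, a, r) \<in> Lt \<longleftrightarrow> 0 < r \<and> cmod z < r" by (simp add: Lt_def)

lemma Gt_iff: "(z, a, r) \<in> Gt \<longleftrightarrow> 0 < r \<and> cmod z < r \<and> (cmod z)^2 = r^2 - 1"
  by (auto simp: Gt_def Lt_def)

lemma Gt_Lt: "g \<in> Gt \<Longrightarrow> g \<in> Lt" by (auto simp: Gt_def)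

lemma ginv_Gt: "g \<in> Gt \<Longrightarrow> ginv g \<in> Gt" by (cases g) (auto simp: Gt_iff)

lemma ginv_ginv [simp]: "ginv (ginv g) = g" by (cases g) auto

lemma zg_cnj: assumes "(zg, ag, rg) \<in> Gt" shows "zg * cnj zg = complex_of_real (rg^2) - 1"
proof -
  have "(cmod zg)^2 = rg^2 - 1" using assms by (simp add: Gt_iff)
  then have "complex_of_real ((cmod zg)^2) = complex_of_real (rg^2) - 1" by simp
  then show ?thesis by (simp only: complex_norm_square)
qed

lemma tact_Lt:
  assumes g: "g \<in> Gt" and a: "a \<in> Lt" shows "tact g a \<in> Lt"
proof -
  obtain zg ag rg where gg: "g = (zg, ag, rg)" by (cases g) auto
  obtain z b s where aa: "a = (z, b, s)" by (cases a) auto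
  define w where "w = complex_of_real rg * cis (- ag)"
  define v where "v = complex_of_real s * cis b"
  have cw: "cnj w = complex_of_real rg * cis ag" unfolding w_def by (simp add: cis_cnj)
  have gp: "0 < rg" "cmod zg < rg" "(cmod zg)^2 = rg^2 - 1" using g gg by (auto simp: Gt_iff)
  have ap: "0 < s" "cmod z < s" using a aa by (auto simp: Lt_iff)
  have "(cmod w)^2 - (cmod zg)^2 = 1" using gp by (simp add: w_def norm_mult)
  from herm_norm[OF this, of z v]
  have h: "(cmod (cnj zg * z + cnj w * v))^2 - (cmod (w*z + zg * v))^2 = (cmod v)^2 - (cmod z)^2" .
  have "(cmod v)^2 - (cmod z)^2 > 0" using ap by (simp add: v_def norm_mult power_strict_mono)
  with h have "(cmod (w*z + zg * v))^2 < (cmod (cnj zg * z + cnj w * v))^2" by simp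
  then have "cmod (w*z + zg * v) < cmod (cnj zg * z + cnj w * v)"
    using power_less_imp_less_base by fastforce
  moreover have "0 < cmod (cnj zg * z + cnj w * v)" using calculation
    by (metis norm_ge_zero order_le_less_trans)
  ultimately show ?thesis unfolding gg aa tact_eq Lt_iff cw[symmetric] w_def[symmetric] v_def[symmetric]
    by (simp add: mult.assoc)
qed

lemma tact_unit: assumes "0 < rg" shows "tact (zg, ag, rg) unitG = (zg, ag, rg)"
  using assms by (simp add: unitG_def tact_eq norm_mult)

lemma Arg_inverse_Re_pos: assumes "0 < Re q" shows "Arg (inverse q) = - Arg q"
  using assms by (auto simp: Arg_inverse Arg_real)

lemma tact_inv:
  assumes g: "g \<in> Gt" and a: "a \<in> Lt" shows "tact (ginv g) (tact g a) = a"
proof -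
  obtain zg ag rg where gg: "g = (zg, ag, rg)" by (cases g) auto
  obtain z b s where aa: "a = (z, b, s)" by (cases a) auto
  have gp: "0 < rg" "cmod zg < rg" using g gg by (auto simp: Gt_iff)
  have ap: "0 < s" "cmod z < s" using a aa by (auto simp: Lt_iff)
  have zc: "zg * cnj zg = complex_of_real (rg^2) - 1" using g gg zg_cnj by simp
  define v where "v = complex_of_real s * cis b"
  define v' where "v' = cnj zg * z + complex_of_real rg * cis ag * v"
  define z' where "z' = complex_of_real rg * cis (- ag) * z + zg * v"
  define q where "q = v' / (complex_of_real (rg * s) * cis (ag + b))"
  define th where "th = ag + b + Arg q"
  have qpos: "0 < Re q" unfolding q_def v'_def v_def using ratio_Re_pos[OF gp ap] by simp
  have qne: "q \<noteq> 0" using qpos by auto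
  have den: "complex_of_real (rg * s) * cis (ag + b) \<noteq> 0" using gp ap by simp
  have v'ne: "v' \<noteq> 0" using qne unfolding q_def by auto
  have nq: "cmod q = cmod v' / (rg * s)" unfolding q_def using gp ap by (simp add: norm_mult norm_divide)
  have key: "complex_of_real (cmod v') * cis th = v'"
  proof -
    have "cis th = cis (ag + b) * cis (Arg q)" unfolding th_def by (simp add: cis_mult)
    also have "cis (Arg q) = q / complex_of_real (cmod q)" using qne by (simp add: cis_Arg Complex.sgn_eq)
    finally have "complex_of_real (cmod v') * cis th = complex_of_real (cmod v') * cis (ag + b) * q / complex_of_real (cmod q)" by simp
    also have "\<dots> = complex_of_real (rg * s) * cis (ag + b) * q"
    proof -
      have cv: "cmod v' = rg * s * cmod q" using nq gp ap by (simp add: field_simps)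
      have "cmod q \<noteq> 0" using qne by simp
      then show ?thesis unfolding cv by (simp add: field_simps)
    qed
    also have "\<dots> = v'" unfolding q_def using den by simp
    finally show ?thesis .
  qed
  have ta: "tact g a = (z', th, cmod v')"
    unfolding gg aa tact_eq z'_def th_def q_def v'_def v_def by simp
  have e1: "complex_of_real rg * cis (- (- ag)) * z' + - zg * (complex_of_real (cmod v') * cis th) = z"
  proof -
    have "complex_of_real rg * cis (- (- ag)) * z' + - zg * (complex_of_real (cmod v') * cis th)
        = complex_of_real rg * cis ag * z' - zg * v'" using key by simp
    also have "\<dots> = (complex_of_real rg * complex_of_real rg * (cis ag * cis (-ag)) - zg * cnj zg) * z"
      unfolding z'_def v'_def by (simp add: algebra_simps)
    also have "\<dots> = z" using zc by (simp add: cis_mult power2_eq_square)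
    finally show ?thesis .
  qed
  have e2: "cnj (- zg) * z' + complex_of_real rg * cis (- ag) * (complex_of_real (cmod v') * cis th) = v"
  proof -
    have "cnj (- zg) * z' + complex_of_real rg * cis (- ag) * (complex_of_real (cmod v') * cis th)
        = - cnj zg * z' + complex_of_real rg * cis (- ag) * v'" using key by simp
    also have "\<dots> = (complex_of_real rg * complex_of_real rg * (cis ag * cis (-ag)) - zg * cnj zg) * v"
      unfolding z'_def v'_def by (simp add: algebra_simps)
    also have "\<dots> = v" using zc by (simp add: cis_mult power2_eq_square)
    finally show ?thesis .
  qed
  have e3: "v / (complex_of_real (rg * cmod v') * cis (- ag + th)) = inverse q / complex_of_real (rg^2)"
  proof -
    have "complex_of_real (rg * cmod v') * cis (- ag + th) = complex_of_real rg * cis (-ag) * (complex_of_real (cmod v') * cis th)"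
      by (simp add: cis_mult)
    also have "\<dots> = complex_of_real rg * cis (-ag) * v'" using key by simp
    finally have d: "complex_of_real (rg * cmod v') * cis (- ag + th) = complex_of_real rg * cis (-ag) * v'" .
    have "cis (-ag) * cis (ag + b) = cis b" by (simp add: cis_mult)
    then show ?thesis unfolding d q_def v_def using gp ap v'ne
      by (simp add: field_simps power2_eq_square)
  qed
  have e4: "- ag + th + Arg (inverse q / complex_of_real (rg^2)) = b"
  proof -
    have "Arg (inverse q / complex_of_real (rg^2)) = Arg (inverse q)"
      using gp by (intro Arg_divide_of_real) simp
    then show ?thesis using qpos by (simp add: Arg_inverse_Re_pos th_def del: of_real_power)
  qed
  have "cmod v = s" using ap by (simp add: v_def norm_mult)
  then have "tact (ginv g) (z', th, cmod v') = (z, b, s)"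
    unfolding gg ginv_simp tact_eq e1 e2 e3 e4 by simp
  then show ?thesis using ta aa by simp
qed

lemma Re_pos_not_nonpos: "0 < Re z \<Longrightarrow> z \<notin> \<real>\<^sub>\<le>\<^sub>0"
  by (auto simp: complex_nonpos_Reals_iff)

lemma tact_fun:
  "(\<lambda>p. tact (fst p) (snd p)) = (\<lambda>p.
    (complex_of_real (snd (snd (fst p))) * cis (- fst (snd (fst p))) * fst (snd p) + fst (fst p) * (complex_of_real (snd (snd (snd p))) * cis (fst (snd (snd p)))),
     fst (snd (fst p)) + fst (snd (snd p)) + Arg ((cnj (fst (fst p)) * fst (snd p) + complex_of_real (snd (snd (fst p))) * cis (fst (snd (fst p))) * (complex_of_real (snd (snd (snd p))) * cis (fst (snd (snd p))))) / (complex_of_real (snd (snd (fst p)) * snd (snd (snd p))) * cis (fst (snd (fst p)) + fst (snd (snd p))))),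
     cmod (cnj (fst (fst p)) * fst (snd p) + complex_of_real (snd (snd (fst p))) * cis (fst (snd (fst p))) * (complex_of_real (snd (snd (snd p))) * cis (fst (snd (snd p)))))))"
  by (rule ext) (auto simp: tact_eq split: prod.splits)

lemma cont_tact_joint: "continuous_on (Lt \<times> Lt) (\<lambda>p. tact (fst p) (snd p))"
  unfolding tact_fun
  apply (intro continuous_intros)
  apply (auto simp: Lt_def intro!: Re_pos_not_nonpos)
  using ratio_Re_pos by (metis of_real_mult)

lemma cont_tact: assumes "g \<in> Lt" shows "continuous_on Lt (tact g)"
proof -
  have "continuous_on Lt (\<lambda>a. (g, a))" by (intro continuous_intros)
  moreover have "(\<lambda>a. (g, a)) ` Lt \<subseteq> Lt \<times> Lt" using assms by auto
  ultimately have "continuous_on Lt ((\<lambda>p. tact (fst p) (snd p)) \<circ> (\<lambda>a. (g, a)))"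
    by (intro continuous_on_compose continuous_on_subset[OF cont_tact_joint]) auto
  then show ?thesis by (simp add: o_def)
qed

lemma tact_key:
  fixes ag b :: real
  assumes gp: "0 < rg" "cmod zg < rg" and ap: "0 < s" "cmod z < s"
  defines "v' \<equiv> cnj zg * z + complex_of_real rg * cis ag * (complex_of_real s * cis b)"
  shows "complex_of_real (cmod v') * cis (ag + b + Arg (v' / (complex_of_real (rg * s) * cis (ag + b)))) = v'"
proof -
  define q where "q = v' / (complex_of_real (rg * s) * cis (ag + b))"
  define th where "th = ag + b + Arg q"
  have qpos: "0 < Re q" unfolding q_def v'_def using ratio_Re_pos[OF gp ap] by simp
  have qne: "q \<noteq> 0" using qpos by auto
  have den: "complex_of_real (rg * s) * cis (ag + b) \<noteq> 0" using gp ap by simp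
  have v'ne: "v' \<noteq> 0" using qne unfolding q_def by auto
  have nq: "cmod q = cmod v' / (rg * s)" unfolding q_def using gp ap by (simp add: norm_mult norm_divide)
  have "cis th = cis (ag + b) * cis (Arg q)" unfolding th_def by (simp add: cis_mult)
  also have "cis (Arg q) = q / complex_of_real (cmod q)" using qne by (simp add: cis_Arg Complex.sgn_eq)
  finally have "complex_of_real (cmod v') * cis th = complex_of_real (cmod v') * cis (ag + b) * q / complex_of_real (cmod q)" by simp
  also have "\<dots> = complex_of_real (rg * s) * cis (ag + b) * q"
  proof -
    have cv: "cmod v' = rg * s * cmod q" using nq gp ap by (simp add: field_simps)
    have "cmod q \<noteq> 0" using qne by simp
    then show ?thesis unfolding cv by (simp add: field_simps)
  qed
  also have "\<dots> = v'" unfolding q_def using den by simp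
  finally show ?thesis unfolding th_def q_def .
qed

definition Mg :: "complex \<times> real \<times> real \<Rightarrow> complex \<times> complex \<Rightarrow> complex \<times> complex" where
  "Mg g p = (case g of (zg, ag, rg) \<Rightarrow> case p of (z, v) \<Rightarrow>
     (complex_of_real rg * cis (- ag) * z + zg * v, cnj zg * z + complex_of_real rg * cis ag * v))"

lemma proj_simp [simp]: "proj (z, a, r) = (z, complex_of_real r * cis a)" by (simp add: proj_def)

lemma proj_tact: assumes "g \<in> Lt" "a \<in> Lt" shows "proj (tact g a) = Mg g (proj a)"
proof -
  obtain zg ag rg where gg: "g = (zg, ag, rg)" by (cases g) auto
  obtain z b s where aa: "a = (z, b, s)" by (cases a) auto
  have gp: "0 < rg" "cmod zg < rg" using assms gg by (auto simp: Lt_iff)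
  have ap: "0 < s" "cmod z < s" using assms aa by (auto simp: Lt_iff)
  show ?thesis unfolding gg aa tact_eq proj_simp tact_key[OF gp ap] Mg_def by simp
qed

lemma form_M:
  fixes w zg z1 v1 z2 v2 :: complex
  assumes "(cmod w)^2 - (cmod zg)^2 = 1"
  shows "form (w*z1 + zg * v1, cnj zg*z1 + cnj w * v1) (w*z2 + zg * v2, cnj zg*z2 + cnj w * v2) = form (z1, v1) (z2, v2)"
proof -
  have "(w*z1 + zg * v1) * cnj (w*z2 + zg * v2) - (cnj zg*z1 + cnj w * v1) * cnj (cnj zg*z2 + cnj w * v2)
      = (w * cnj w - zg * cnj zg) * (z1 * cnj z2 - v1 * cnj v2)"
    by (simp add: algebra_simps)
  also have "w * cnj w - zg * cnj zg = 1"
    using assms by (metis complex_norm_square of_real_1 of_real_diff)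
  finally have h: "(w*z1 + zg * v1) * cnj (w*z2 + zg * v2) - (cnj zg*z1 + cnj w * v1) * cnj (cnj zg*z2 + cnj w * v2)
      = z1 * cnj z2 - v1 * cnj v2" by simp
  show ?thesis unfolding form_def prod.case h ..
qed

lemma form_transport:
  assumes g: "g \<in> Gt" and b: "b \<in> Lt"
  shows "form (proj g) (proj (tact g b)) = form (proj unitG) (proj b)"
proof -
  obtain zg ag rg where gg: "g = (zg, ag, rg)" by (cases g) auto
  obtain z c s where bb: "b = (z, c, s)" by (cases b) auto
  define w where "w = complex_of_real rg * cis (- ag)"
  have cw: "cnj w = complex_of_real rg * cis ag" unfolding w_def by (simp add: cis_cnj)
  have gp: "0 < rg" "(cmod zg)^2 = rg^2 - 1" using g gg by (auto simp: Gt_iff)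
  have n: "(cmod w)^2 - (cmod zg)^2 = 1" using gp by (simp add: w_def norm_mult)
  have pg: "proj g = (w * 0 + zg * 1, cnj zg * 0 + cnj w * 1)" unfolding gg cw by simp
  have pt: "proj (tact g b) = (w * z + zg * (complex_of_real s * cis c), cnj zg * z + cnj w * (complex_of_real s * cis c))"
    using proj_tact[OF Gt_Lt[OF g] b] unfolding gg bb Mg_def cw w_def by (simp add: cis_cnj)
  show ?thesis unfolding pg pt form_M[OF n] by (simp add: unitG_def bb)
qed

lemma proj_Lset: "a \<in> Lt \<Longrightarrow> proj a \<in> Lset"
  by (cases a) (auto simp: Lt_iff Lset_def norm_mult)

lemma transport_set:
  assumes g: "g \<in> Gt"
  shows "{a \<in> Lt. P (form (proj g) (proj a))} = tact g ` {b \<in> Lt. P (form (proj unitG) (proj b))}"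
proof
  show "tact g ` {b \<in> Lt. P (form (proj unitG) (proj b))} \<subseteq> {a \<in> Lt. P (form (proj g) (proj a))}"
    using g by (auto simp: form_transport tact_Lt)
next
  show "{a \<in> Lt. P (form (proj g) (proj a))} \<subseteq> tact g ` {b \<in> Lt. P (form (proj unitG) (proj b))}"
  proof
    fix a assume a: "a \<in> {a \<in> Lt. P (form (proj g) (proj a))}"
    define b where "b = tact (ginv g) a"
    have bL: "b \<in> Lt" unfolding b_def using a ginv_Gt[OF g] tact_Lt by auto
    have ab: "tact g b = a" unfolding b_def using tact_inv[OF ginv_Gt[OF g]] a by simp
    have "P (form (proj unitG) (proj b))" using a form_transport[OF g bL] ab by simp
    then show "a \<in> tact g ` {b \<in> Lt. P (form (proj unitG) (proj b))}" using bL ab by blast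
  qed
qed



lemma form_unit: "form (proj unitG) (proj b) = - snd (snd b) * cos (fst (snd b))"
  by (cases b) (simp add: unitG_def form_def)

lemma abs_pi2_cos: "\<bar>a\<bar> = pi/2 \<Longrightarrow> cos a = 0"
proof -
  assume "\<bar>a\<bar> = pi/2"
  then have "a = pi/2 \<or> a = -pi/2" by arith
  then show ?thesis
  proof
    assume h: "a = pi/2" show ?thesis unfolding h by simp
  next
    assume h: "a = -pi/2" show ?thesis unfolding h by simp
  qed
qed

lemma cc_clopen:
  assumes "T \<subseteq> S" "connected T" "x \<in> T" "open U" "closed F" "T = S \<inter> U" "T = S \<inter> F"
  shows "connected_component_set S x = T"
proof
  show "T \<subseteq> connected_component_set S x" using assms by (intro connected_component_maximal) auto
next
  let ?C = "connected_component_set S x"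
  have C: "connected ?C" "?C \<subseteq> S" "x \<in> ?C"
    using assms connected_component_refl_eq by (auto simp: connected_connected_component connected_component_subset)
  have "openin (top_of_set ?C) (?C \<inter> U)" using assms(4) by (rule openin_open_Int)
  moreover have "closedin (top_of_set ?C) (?C \<inter> F)" using assms(5) by (rule closedin_closed_Int)
  moreover have "?C \<inter> U = ?C \<inter> F" using C(2) assms(6,7) by blast
  ultimately have "?C \<inter> U = {} \<or> ?C \<inter> U = ?C" using C(1) unfolding connected_clopen by metis
  moreover have "x \<in> ?C \<inter> U" using C assms by auto
  ultimately have "?C \<subseteq> U" by blast
  then show "?C \<subseteq> T" using C(2) assms(6) by blast
qed

lemma nlp: "cmod z < r \<Longrightarrow> 0 < r" by (meson norm_ge_zero order_le_less_trans)

definition SetT :: "real set \<Rightarrow> (complex \<times> real \<times> real) set" where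
  "SetT T = {(z, a, r). \<bar>a\<bar> < pi/2 \<and> r * cos a \<in> T \<and> cmod z < r}"

lemma SetT_iff: "(z, a, r) \<in> SetT T \<longleftrightarrow> \<bar>a\<bar> < pi/2 \<and> r * cos a \<in> T \<and> cmod z < r"
  by (simp add: SetT_def)

lemma cos_pos_abs: "\<bar>a\<bar> < pi/2 \<Longrightarrow> 0 < cos a"
  by (intro cos_gt_zero_pi) auto

lemma connected_SetT:
  assumes "convex T" "T \<subseteq> {0<..}"
  shows "connected (SetT T)"
proof -
  define D where "D = ball (0::complex) 1 \<times> ({-pi/2<..<pi/2} \<times> T)"
  define h where "h = (\<lambda>p::complex \<times> real \<times> real. (fst p * complex_of_real (snd (snd p) / cos (fst (snd p))), fst (snd p), snd (snd p) / cos (fst (snd p))))"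
  have "convex D" unfolding D_def using assms(1) by (intro convex_Times convex_ball) auto
  then have cD: "connected D" by (rule convex_connected)
  have cos0: "cos (fst (snd p)) \<noteq> 0" if "p \<in> D" for p
  proof -
    have "\<bar>fst (snd p)\<bar> < pi/2" using that by (auto simp: D_def abs_less_iff)
    then show ?thesis using cos_pos_abs by force
  qed
  have "continuous_on D h" unfolding h_def using cos0 by (intro continuous_intros) auto
  then have "connected (h ` D)" using cD by (rule connected_continuous_image)
  moreover have "h ` D = SetT T"
  proof
    show "h ` D \<subseteq> SetT T"
    proof
      fix y assume "y \<in> h ` D"
      then obtain \<zeta> a t where p: "(\<zeta>, a, t) \<in> D" and y: "y = h (\<zeta>, a, t)" by auto
      have a: "\<bar>a\<bar> < pi/2" and t: "t \<in> T" and z: "cmod \<zeta> < 1" using p by (auto simp: D_def abs_less_iff)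
      have c: "0 < cos a" using cos_pos_abs[OF a] .
      have tp: "0 < t" using t assms(2) by auto
      have "cmod \<zeta> * t < 1 * t" using z tp by (intro mult_strict_right_mono) auto
      then have "cmod \<zeta> * t / cos a < t / cos a" using c by (intro divide_strict_right_mono) auto
      moreover have "cmod (\<zeta> * complex_of_real t / complex_of_real (cos a)) = cmod \<zeta> * t / cos a"
        using tp c by (simp add: norm_mult norm_divide)
      ultimately have "cmod (\<zeta> * complex_of_real t / complex_of_real (cos a)) < t / cos a" by simp
      then show "y \<in> SetT T" unfolding y h_def using a t c
        by (simp add: SetT_iff norm_mult)
    qed
  next
    show "SetT T \<subseteq> h ` D"
    proof
      fix y assume y: "y \<in> SetT T"
      obtain z a r where yy: "y = (z, a, r)" by (cases y) auto
      have a: "\<bar>a\<bar> < pi/2" and t: "r * cos a \<in> T" and z: "cmod z < r" using y yy by (auto simp: SetT_iff)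
      have c: "0 < cos a" using cos_pos_abs[OF a] .
      have rp: "0 < r" using z by (meson norm_ge_zero order_le_less_trans)
      have "(z / complex_of_real r, a, r * cos a) \<in> D" unfolding D_def using a t z rp
        by (auto simp: norm_divide abs_less_iff)
      moreover have "h (z / complex_of_real r, a, r * cos a) = y" unfolding h_def yy using c rp by simp
      ultimately show "y \<in> h ` D" by force
    qed
  qed
  ultimately show ?thesis by simp
qed

definition "A0 = SetT {1<..}"
definition "E0 = SetT {1}"
definition "I0 = SetT {1..}"

lemma open_A0: "open A0"
proof -
  have "A0 = {p. \<bar>fst (snd p)\<bar> < pi/2} \<inter> {p. 1 < snd (snd p) * cos (fst (snd p))} \<inter> {p. cmod (fst p) < snd (snd p)}"
  proof (rule set_eqI)
    fix p :: "complex \<times> real \<times> real"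
    obtain z a r where pp: "p = (z, a, r)" by (cases p) auto
    show "p \<in> A0 \<longleftrightarrow> p \<in> {p. \<bar>fst (snd p)\<bar> < pi/2} \<inter> {p. 1 < snd (snd p) * cos (fst (snd p))} \<inter> {p. cmod (fst p) < snd (snd p)}"
      unfolding pp A0_def SetT_iff by simp
  qed
  also have "open \<dots>"
    by (intro open_Int open_Collect_less continuous_intros)
  finally show ?thesis .
qed

lemma A0_Lt: "A0 \<subseteq> Lt" and E0_Lt: "E0 \<subseteq> Lt" and I0_Lt: "I0 \<subseteq> Lt"
  by (auto simp: A0_def E0_def I0_def SetT_def Lt_def dest: nlp)

lemma closure_A0: "Lt \<inter> closure A0 = I0"
proof
  define F where "F = {p::complex\<times>real\<times>real. \<bar>fst (snd p)\<bar> \<le> pi/2} \<inter> {p. 1 \<le> snd (snd p) * cos (fst (snd p))}"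
  have "closed F" unfolding F_def by (intro closed_Int closed_Collect_le continuous_intros)
  moreover have "A0 \<subseteq> F" by (auto simp: A0_def SetT_def F_def)
  ultimately have "closure A0 \<subseteq> F" by (rule closure_minimal[rotated])
  moreover have "Lt \<inter> F \<subseteq> I0"
  proof
    fix p assume p: "p \<in> Lt \<inter> F"
    obtain z a r where pp: "p = (z, a, r)" by (cases p) auto
    have h: "\<bar>a\<bar> \<le> pi/2" "1 \<le> r * cos a" "cmod z < r" using p pp by (auto simp: F_def Lt_def)
    have "\<bar>a\<bar> \<noteq> pi/2"
    proof
      assume "\<bar>a\<bar> = pi/2"
      then have "cos a = 0" by (rule abs_pi2_cos)
      then show False using h by simp
    qed
    then show "p \<in> I0" using h pp by (auto simp: I0_def SetT_def)
  qed
  ultimately show "Lt \<inter> closure A0 \<subseteq> I0" by blast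
next
  show "I0 \<subseteq> Lt \<inter> closure A0"
  proof
    fix p assume p: "p \<in> I0"
    obtain z a r where pp: "p = (z, a, r)" by (cases p) auto
    have h: "\<bar>a\<bar> < pi/2" "1 \<le> r * cos a" "cmod z < r" using p pp by (auto simp: I0_def SetT_def)
    have c: "0 < cos a" using cos_pos_abs[OF h(1)] .
    have "p \<in> closure A0"
      unfolding closure_approachable
    proof (intro allI impI)
      fix e :: real assume e: "0 < e"
      have "0 < e * cos a" using c e by simp
      then have "1 < (r + e/2) * cos a" using h(2) by (simp add: distrib_right)
      then have "(z, a, r + e/2) \<in> A0" using h c e
        unfolding A0_def SetT_iff by simp
      moreover have "dist (z, a, r + e/2) p < e" using e pp by (simp add: dist_Pair_Pair dist_real_def)
      ultimately show "\<exists>y\<in>A0. dist y p < e" by blast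
    qed
    then show "p \<in> Lt \<inter> closure A0" using p I0_Lt by auto
  qed
qed

lemma Lt_Ibar: "Lt \<inter> proj -` Ibar g = {a \<in> Lt. form (proj g) (proj a) \<le> -1}"
  using proj_Lset by (auto simp: Ibar_def)

lemma Lt_Ebar: "Lt \<inter> proj -` Ebar g = {a \<in> Lt. form (proj g) (proj a) = -1}"
  using proj_Lset by (auto simp: Ebar_def)

lemma unitG_in: "unitG \<in> I0" "unitG \<in> E0"
  by (auto simp: unitG_def I0_def E0_def SetT_def)

lemma Ig_unit: "Ig unitG = I0"
proof -
  have S: "Lt \<inter> proj -` Ibar unitG = {b \<in> Lt. 1 \<le> snd (snd b) * cos (fst (snd b))}"
    unfolding Lt_Ibar form_unit by auto
  show ?thesis unfolding Ig_def S
  proof (rule cc_clopen[where U = "{p. \<bar>fst (snd p)\<bar> < pi/2}" and F = "{p. \<bar>fst (snd p)\<bar> \<le> pi/2}"])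
    show "I0 \<subseteq> {b \<in> Lt. 1 \<le> snd (snd b) * cos (fst (snd b))}" using I0_Lt by (auto simp: I0_def SetT_def)
    show "connected I0" unfolding I0_def by (rule connected_SetT) auto
    show "unitG \<in> I0" by (rule unitG_in)
    show "open {p::complex\<times>real\<times>real. \<bar>fst (snd p)\<bar> < pi/2}" by (intro open_Collect_less continuous_intros)
    show "closed {p::complex\<times>real\<times>real. \<bar>fst (snd p)\<bar> \<le> pi/2}" by (intro closed_Collect_le continuous_intros)
    have aux: "\<And>a r::real. \<bar>a\<bar> \<le> pi/2 \<Longrightarrow> 1 \<le> r * cos a \<Longrightarrow> \<bar>a\<bar> < pi/2"
    proof (rule ccontr)
      fix a r :: real assume "\<bar>a\<bar> \<le> pi/2" "1 \<le> r * cos a" "\<not> \<bar>a\<bar> < pi/2"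
      then have "\<bar>a\<bar> = pi/2" by simp
      then have "cos a = 0" by (rule abs_pi2_cos)
      then show False using \<open>1 \<le> r * cos a\<close> by simp
    qed
    show "I0 = {b \<in> Lt. 1 \<le> snd (snd b) * cos (fst (snd b))} \<inter> {p. \<bar>fst (snd p)\<bar> < pi / 2}"
    proof (rule set_eqI)
      fix p :: "complex \<times> real \<times> real"
      obtain z a r where pp: "p = (z, a, r)" by (cases p) auto
      have "cmod z < r \<Longrightarrow> 0 < r" by (meson norm_ge_zero order_le_less_trans)
      then show "p \<in> I0 \<longleftrightarrow> p \<in> {b \<in> Lt. 1 \<le> snd (snd b) * cos (fst (snd b))} \<inter> {p. \<bar>fst (snd p)\<bar> < pi / 2}"
        unfolding pp I0_def SetT_iff by (auto simp: Lt_iff dest: nlp)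
    qed
    show "I0 = {b \<in> Lt. 1 \<le> snd (snd b) * cos (fst (snd b))} \<inter> {p. \<bar>fst (snd p)\<bar> \<le> pi / 2}"
    proof (rule set_eqI)
      fix p :: "complex \<times> real \<times> real"
      obtain z a r where pp: "p = (z, a, r)" by (cases p) auto
      have "cmod z < r \<Longrightarrow> 0 < r" by (meson norm_ge_zero order_le_less_trans)
      then show "p \<in> I0 \<longleftrightarrow> p \<in> {b \<in> Lt. 1 \<le> snd (snd b) * cos (fst (snd b))} \<inter> {p. \<bar>fst (snd p)\<bar> \<le> pi / 2}"
        unfolding pp I0_def SetT_iff using aux[of a r] by (auto simp: Lt_iff dest: nlp)
    qed
  qed
qed



lemma aux_half: "\<bar>a\<bar> \<le> pi/2 \<Longrightarrow> 1 \<le> r * cos a \<Longrightarrow> \<bar>a\<bar> < pi/2"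
proof (rule ccontr)
  assume "\<bar>a\<bar> \<le> pi/2" "1 \<le> r * cos a" "\<not> \<bar>a\<bar> < pi/2"
  then have "\<bar>a\<bar> = pi/2" by simp
  then have "cos a = 0" by (rule abs_pi2_cos)
  then show False using \<open>1 \<le> r * cos a\<close> by simp
qed

lemma Eg_unit: "Eg unitG = E0"
proof -
  have S: "Lt \<inter> proj -` Ebar unitG = {b \<in> Lt. snd (snd b) * cos (fst (snd b)) = 1}"
    unfolding Lt_Ebar form_unit by auto
  show ?thesis unfolding Eg_def S
  proof (rule cc_clopen[where U = "{p. \<bar>fst (snd p)\<bar> < pi/2}" and F = "{p. \<bar>fst (snd p)\<bar> \<le> pi/2}"])
    show "E0 \<subseteq> {b \<in> Lt. snd (snd b) * cos (fst (snd b)) = 1}" using E0_Lt by (auto simp: E0_def SetT_def)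
    show "connected E0" unfolding E0_def by (rule connected_SetT) auto
    show "unitG \<in> E0" by (rule unitG_in)
    show "open {p::complex\<times>real\<times>real. \<bar>fst (snd p)\<bar> < pi/2}" by (intro open_Collect_less continuous_intros)
    show "closed {p::complex\<times>real\<times>real. \<bar>fst (snd p)\<bar> \<le> pi/2}" by (intro closed_Collect_le continuous_intros)
    show "E0 = {b \<in> Lt. snd (snd b) * cos (fst (snd b)) = 1} \<inter> {p. \<bar>fst (snd p)\<bar> < pi / 2}"
    proof (rule set_eqI)
      fix p :: "complex \<times> real \<times> real"
      obtain z a r where pp: "p = (z, a, r)" by (cases p) auto
      show "p \<in> E0 \<longleftrightarrow> p \<in> {b \<in> Lt. snd (snd b) * cos (fst (snd b)) = 1} \<inter> {p. \<bar>fst (snd p)\<bar> < pi / 2}"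
        unfolding pp E0_def SetT_iff by (auto simp: Lt_iff dest: nlp)
    qed
    show "E0 = {b \<in> Lt. snd (snd b) * cos (fst (snd b)) = 1} \<inter> {p. \<bar>fst (snd p)\<bar> \<le> pi / 2}"
    proof (rule set_eqI)
      fix p :: "complex \<times> real \<times> real"
      obtain z a r where pp: "p = (z, a, r)" by (cases p) auto
      show "p \<in> E0 \<longleftrightarrow> p \<in> {b \<in> Lt. snd (snd b) * cos (fst (snd b)) = 1} \<inter> {p. \<bar>fst (snd p)\<bar> \<le> pi / 2}"
        unfolding pp E0_def SetT_iff using aux_half[of a r] by (auto simp: Lt_iff dest: nlp)
    qed
  qed
qed

lemma A0_comp: "connected_component_set (Lt - E0) (0, 0, 2) = A0"
proof (rule cc_clopen[where U = A0 and F = "{p. \<bar>fst (snd p)\<bar> \<le> pi/2} \<inter> {p. 1 \<le> snd (snd p) * cos (fst (snd p))}"])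
  have d: "A0 \<inter> E0 = {}" by (auto simp: A0_def E0_def SetT_def)
  show "A0 \<subseteq> Lt - E0" using A0_Lt d by blast
  show "connected A0" unfolding A0_def by (rule connected_SetT) auto
  show "(0, 0, 2) \<in> A0" by (simp add: A0_def SetT_iff)
  show "open A0" by (rule open_A0)
  show "closed ({p::complex\<times>real\<times>real. \<bar>fst (snd p)\<bar> \<le> pi/2} \<inter> {p. 1 \<le> snd (snd p) * cos (fst (snd p))})"
    by (intro closed_Int closed_Collect_le continuous_intros)
  show "A0 = (Lt - E0) \<inter> A0" using A0_Lt d by blast
  show "A0 = (Lt - E0) \<inter> ({p. \<bar>fst (snd p)\<bar> \<le> pi/2} \<inter> {p. 1 \<le> snd (snd p) * cos (fst (snd p))})"
  proof (rule set_eqI)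
    fix p :: "complex \<times> real \<times> real"
    obtain z a r where pp: "p = (z, a, r)" by (cases p) auto
    show "p \<in> A0 \<longleftrightarrow> p \<in> (Lt - E0) \<inter> ({p. \<bar>fst (snd p)\<bar> \<le> pi/2} \<inter> {p. 1 \<le> snd (snd p) * cos (fst (snd p))})"
      unfolding pp A0_def E0_def using aux_half[of a r] by (auto simp: Lt_iff SetT_iff dest: nlp)
  qed
qed

lemma open_Lt: "open Lt"
proof -
  have "Lt = {p::complex\<times>real\<times>real. 0 < snd (snd p)} \<inter> {p. cmod (fst p) < snd (snd p)}"
    by (auto simp: Lt_def)
  also have "open \<dots>" by (intro open_Int open_Collect_less continuous_intros)
  finally show ?thesis .
qed

locale homLt =
  fixes f f' :: "complex \<times> real \<times> real \<Rightarrow> complex \<times> real \<times> real"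
  assumes cf: "continuous_on Lt f" and cf': "continuous_on Lt f'"
    and mf: "\<And>x. x \<in> Lt \<Longrightarrow> f x \<in> Lt" and mf': "\<And>x. x \<in> Lt \<Longrightarrow> f' x \<in> Lt"
    and inv1: "\<And>x. x \<in> Lt \<Longrightarrow> f' (f x) = x" and inv2: "\<And>x. x \<in> Lt \<Longrightarrow> f (f' x) = x"
begin

lemma cc_image_sub:
  assumes "S \<subseteq> Lt" "x \<in> S"
  shows "f ` connected_component_set S x \<subseteq> connected_component_set (f ` S) (f x)"
proof (rule connected_component_maximal)
  have sub: "connected_component_set S x \<subseteq> Lt" using assms connected_component_subset by blast
  show "f x \<in> f ` connected_component_set S x" using assms by auto
  show "connected (f ` connected_component_set S x)"
    by (rule connected_continuous_image[OF continuous_on_subset[OF cf sub]]) (simp add: connected_connected_component)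
  show "f ` connected_component_set S x \<subseteq> f ` S" using connected_component_subset by blast
qed

lemma cc_image_sub':
  assumes "S \<subseteq> Lt" "x \<in> S"
  shows "f' ` connected_component_set S x \<subseteq> connected_component_set (f' ` S) (f' x)"
proof (rule connected_component_maximal)
  have sub: "connected_component_set S x \<subseteq> Lt" using assms connected_component_subset by blast
  show "f' x \<in> f' ` connected_component_set S x" using assms by auto
  show "connected (f' ` connected_component_set S x)"
    by (rule connected_continuous_image[OF continuous_on_subset[OF cf' sub]]) (simp add: connected_connected_component)
  show "f' ` connected_component_set S x \<subseteq> f' ` S" using connected_component_subset by blast
qed

lemma img_inv: "S \<subseteq> Lt \<Longrightarrow> f' ` f ` S = S"
  using inv1 by (force simp: image_image)

lemma img_inv2: "S \<subseteq> Lt \<Longrightarrow> f ` f' ` S = S"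
  using inv2 by (force simp: image_image)

lemma cc_image:
  assumes "S \<subseteq> Lt" "x \<in> S"
  shows "connected_component_set (f ` S) (f x) = f ` connected_component_set S x"
proof
  show "f ` connected_component_set S x \<subseteq> connected_component_set (f ` S) (f x)"
    by (rule cc_image_sub[OF assms])
next
  have fS: "f ` S \<subseteq> Lt" using assms mf by auto
  have "f' ` connected_component_set (f ` S) (f x) \<subseteq> connected_component_set (f' ` f ` S) (f' (f x))"
    by (rule cc_image_sub'[OF fS]) (use assms in auto)
  also have "\<dots> = connected_component_set S x"
  proof -
    have "f' (f x) = x" using assms(1,2) by (intro inv1) auto
    moreover have "f' ` f ` S = S" using img_inv assms by auto
    ultimately show ?thesis by simp
  qed
  finally have "f ` f' ` connected_component_set (f ` S) (f x) \<subseteq> f ` connected_component_set S x" by blast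
  moreover have "f ` f' ` connected_component_set (f ` S) (f x) = connected_component_set (f ` S) (f x)"
    using fS connected_component_subset img_inv2 by (meson order_trans)
  ultimately show "connected_component_set (f ` S) (f x) \<subseteq> f ` connected_component_set S x" by simp
qed

lemma closure_pt:
  fixes g :: "complex \<times> real \<times> real \<Rightarrow> complex \<times> real \<times> real"
  assumes cg: "continuous_on Lt g" and y: "y \<in> Lt" "y \<in> closure A"
  shows "g y \<in> closure (g ` A)"
proof -
  have ic: "isCont g y" using cg y open_Lt continuous_on_eq_continuous_at by blast
  obtain X where X: "\<And>n. X n \<in> A" "X \<longlonglongrightarrow> y" using y(2) unfolding closure_sequential by blast
  have "(\<lambda>n. g (X n)) \<longlonglongrightarrow> g y" by (rule isCont_tendsto_compose[OF ic X(2)])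
  moreover have "\<And>n. g (X n) \<in> g ` A" using X by auto
  ultimately show ?thesis unfolding closure_sequential by (intro exI[of _ "\<lambda>n. g (X n)"]) simp
qed

lemma closure_image:
  assumes "A \<subseteq> Lt"
  shows "Lt \<inter> closure (f ` A) = f ` (Lt \<inter> closure A)"
proof
  show "f ` (Lt \<inter> closure A) \<subseteq> Lt \<inter> closure (f ` A)" using closure_pt[OF cf] mf by auto
next
  show "Lt \<inter> closure (f ` A) \<subseteq> f ` (Lt \<inter> closure A)"
  proof
    fix y assume y: "y \<in> Lt \<inter> closure (f ` A)"
    have "f' y \<in> closure (f' ` f ` A)" using closure_pt[OF cf'] y by auto
    then have "f' y \<in> Lt \<inter> closure A" using img_inv[OF assms] mf' y by auto
    moreover have "y = f (f' y)" using inv2 y by auto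
    ultimately show "y \<in> f ` (Lt \<inter> closure A)" by blast
  qed
qed

lemma open_image:
  assumes "open A" "A \<subseteq> Lt"
  shows "open (f ` A)"
proof -
  have "f ` A = Lt \<inter> f' -` A"
  proof
    show "f ` A \<subseteq> Lt \<inter> f' -` A" using assms mf inv1 by auto
    show "Lt \<inter> f' -` A \<subseteq> f ` A"
    proof
      fix y assume "y \<in> Lt \<inter> f' -` A"
      then show "y \<in> f ` A" using inv2 by (metis IntD1 IntD2 image_eqI vimageE)
    qed
  qed
  also have "open \<dots>"
  proof -
    have "open (f' -` A \<inter> Lt)" using iffD1[OF continuous_on_open_vimage[OF open_Lt] cf'] assms(1) by blast
    then show ?thesis by (simp add: Int_commute)
  qed
  finally show ?thesis .
qed

lemma diff_image: "A \<subseteq> Lt \<Longrightarrow> Lt - f ` A = f ` (Lt - A)"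
proof
  assume A: "A \<subseteq> Lt"
  show "Lt - f ` A \<subseteq> f ` (Lt - A)"
  proof
    fix y assume y: "y \<in> Lt - f ` A"
    then have "f' y \<in> Lt - A" using mf' inv2 by (metis DiffD1 DiffD2 DiffI image_eqI)
    then show "y \<in> f ` (Lt - A)" using inv2 y by (metis DiffD1 image_eqI)
  qed
  show "f ` (Lt - A) \<subseteq> Lt - f ` A"
  proof
    fix y assume "y \<in> f ` (Lt - A)"
    then obtain x where x: "x \<in> Lt" "x \<notin> A" "y = f x" by auto
    have "y \<in> Lt" using x mf by auto
    moreover have "y \<notin> f ` A"
    proof
      assume "y \<in> f ` A"
      then obtain x' where "x' \<in> A" "y = f x'" by auto
      moreover have "f' (f x') = x'" using A \<open>x' \<in> A\<close> by (intro inv1) auto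
      moreover have "f' (f x) = x" using x by (intro inv1) auto
      ultimately show False using x \<open>x' \<in> A\<close> by metis
    qed
    ultimately show "y \<in> Lt - f ` A" by simp
  qed
qed

end

lemma homLt_tact: assumes g: "g \<in> Gt" shows "homLt (tact g) (tact (ginv g))"
proof (rule homLt.intro)
  show "continuous_on Lt (tact g)" by (rule cont_tact[OF Gt_Lt[OF g]])
  show "continuous_on Lt (tact (ginv g))" by (rule cont_tact[OF Gt_Lt[OF ginv_Gt[OF g]]])
  show "\<And>x. x \<in> Lt \<Longrightarrow> tact g x \<in> Lt" by (rule tact_Lt[OF g])
  show "\<And>x. x \<in> Lt \<Longrightarrow> tact (ginv g) x \<in> Lt" by (rule tact_Lt[OF ginv_Gt[OF g]])
  show "\<And>x. x \<in> Lt \<Longrightarrow> tact (ginv g) (tact g x) = x" by (rule tact_inv[OF g])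
  show "\<And>x. x \<in> Lt \<Longrightarrow> tact g (tact (ginv g) x) = x" using tact_inv[OF ginv_Gt[OF g]] by simp
qed



lemma tact_unit_Gt: "g \<in> Gt \<Longrightarrow> tact g unitG = g"
  by (cases g) (auto simp: Gt_iff tact_unit)

lemma unitG_Lt: "unitG \<in> Lt" by (simp add: unitG_def Lt_iff)

lemma H_disj:
  assumes g: "g \<in> Gt"
  shows "Hg g \<inter> tact g ` A0 = {}"
proof -
  interpret homLt "tact g" "tact (ginv g)" by (rule homLt_tact[OF g])
  let ?f = "tact g"
  have gu: "?f unitG = g" by (rule tact_unit_Gt[OF g])
  have SI: "Lt \<inter> proj -` Ibar g = ?f ` (Lt \<inter> proj -` Ibar unitG)"
    unfolding Lt_Ibar using transport_set[OF g, of "\<lambda>t. t \<le> -1"] by simp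
  have SE: "Lt \<inter> proj -` Ebar g = ?f ` (Lt \<inter> proj -` Ebar unitG)"
    unfolding Lt_Ebar using transport_set[OF g, of "\<lambda>t. t = -1"] by simp
  have uI: "unitG \<in> Lt \<inter> proj -` Ibar unitG"
    unfolding Lt_Ibar using unitG_Lt by (simp add: form_def unitG_def)
  have uE: "unitG \<in> Lt \<inter> proj -` Ebar unitG"
    unfolding Lt_Ebar using unitG_Lt by (simp add: form_def unitG_def)
  have IG: "Ig g = ?f ` I0"
    unfolding Ig_def SI using cc_image[of "Lt \<inter> proj -` Ibar unitG" unitG] uI gu
    by (simp add: Ig_unit[unfolded Ig_def])
  have EG: "Eg g = ?f ` E0"
    unfolding Eg_def SE using cc_image[of "Lt \<inter> proj -` Ebar unitG" unitG] uE gu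
    by (simp add: Eg_unit[unfolded Eg_def])
  have LE: "Lt - Eg g = ?f ` (Lt - E0)" unfolding EG by (rule diff_image[OF E0_Lt])
  have x0: "(0, 0, 2) \<in> Lt - E0" by (simp add: Lt_iff E0_def SetT_iff)
  have AC: "?f ` A0 = connected_component_set (Lt - Eg g) (?f (0, 0, 2))"
    unfolding LE using cc_image[of "Lt - E0" "(0,0,2)"] x0 A0_comp by auto
  have comp: "?f ` A0 \<in> components (Lt - Eg g)"
    unfolding AC components_iff using x0 LE by auto
  have clo: "Lt \<inter> closure (?f ` A0) = Ig g"
    unfolding IG closure_image[OF A0_Lt] closure_A0 ..
  have op: "open (?f ` A0)" by (rule open_image[OF open_A0 A0_Lt])
  have "\<Union>{C \<in> components (Lt - Eg g). Lt \<inter> closure C \<noteq> Ig g} \<inter> ?f ` A0 = {}"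
  proof -
    have "C \<inter> ?f ` A0 = {}" if "C \<in> components (Lt - Eg g)" "Lt \<inter> closure C \<noteq> Ig g" for C
      using components_nonoverlap[OF that(1) comp] that(2) clo by auto
    then show ?thesis by blast
  qed
  then have "?f ` A0 \<inter> closure (\<Union>{C \<in> components (Lt - Eg g). Lt \<inter> closure C \<noteq> Ig g}) = {}"
    using open_Int_closure_eq_empty[OF op] by blast
  then show ?thesis unfolding Hg_def by blast
qed

lemma H_not_A0:
  assumes g: "g \<in> Gt" and y: "y \<in> Hg g"
  shows "tact (ginv g) y \<notin> A0"
proof
  assume a: "tact (ginv g) y \<in> A0"
  have yL: "y \<in> Lt" using y by (simp add: Hg_def)
  have "tact g (tact (ginv g) y) = y" using tact_inv[OF ginv_Gt[OF g] yL] by simp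
  then have "y \<in> tact g ` A0" using a by force
  then show False using H_disj[OF g] y by blast
qed

lemma moeb_0: "0 < rg \<Longrightarrow> moeb (zg, ag, rg) 0 = zg / (complex_of_real rg * cis ag)"
  by (simp add: moeb_def cis_cnj)

lemma tact_ginv_explicit:
  assumes g: "(zg, ag, rg) \<in> Gt" and zx: "zg = x * complex_of_real rg * cis ag" and s: "0 < s"
  shows "fst (snd (tact (ginv (zg, ag, rg)) (z, b, s))) = b - ag + Arg ((complex_of_real s * cis b - cnj x * z) / (complex_of_real s * cis b))"
    and "snd (snd (tact (ginv (zg, ag, rg)) (z, b, s))) = rg * cmod (complex_of_real s * cis b - cnj x * z)"
proof -
  have rg: "0 < rg" using g by (simp add: Gt_iff)
  have num: "cnj (- zg) * z + complex_of_real rg * cis (- ag) * (complex_of_real s * cis b)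
      = complex_of_real rg * cis (- ag) * (complex_of_real s * cis b - cnj x * z)"
    unfolding zx by (simp add: cis_cnj algebra_simps)
  have den: "complex_of_real (rg * s) * cis (- ag + b) = complex_of_real rg * cis (- ag) * (complex_of_real s * cis b)"
    by (simp add: cis_mult algebra_simps)
  have ne: "complex_of_real rg * cis (- ag) \<noteq> 0" using rg by simp
  show "fst (snd (tact (ginv (zg, ag, rg)) (z, b, s))) = b - ag + Arg ((complex_of_real s * cis b - cnj x * z) / (complex_of_real s * cis b))"
    unfolding ginv_simp tact_eq num den using ne by simp
  show "snd (snd (tact (ginv (zg, ag, rg)) (z, b, s))) = rg * cmod (complex_of_real s * cis b - cnj x * z)"
    unfolding ginv_simp tact_eq num using rg by (simp add: norm_mult)
qed

lemma key_bound:
  assumes g: "(zg, ag, rg) \<in> Gt" and y: "(z, b, s) \<in> Hg (zg, ag, rg)"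
    and x: "x = moeb (zg, ag, rg) 0"
    and ang: "\<bar>b - ag + Arg ((complex_of_real s * cis b - cnj x * z) / (complex_of_real s * cis b))\<bar> < pi/2"
  shows "rg * cmod (complex_of_real s * cis b - cnj x * z) * cos (b - ag + Arg ((complex_of_real s * cis b - cnj x * z) / (complex_of_real s * cis b))) \<le> 1"
proof -
  have rg: "0 < rg" using g by (simp add: Gt_iff)
  have zx: "zg = x * complex_of_real rg * cis ag" unfolding x moeb_0[OF rg] using rg by simp
  have yL: "(z, b, s) \<in> Lt" using y by (simp add: Hg_def)
  then have s: "0 < s" by (simp add: Lt_iff)
  have nA: "tact (ginv (zg, ag, rg)) (z, b, s) \<notin> A0" by (rule H_not_A0[OF g y])
  have inL: "tact (ginv (zg, ag, rg)) (z, b, s) \<in> Lt" by (rule tact_Lt[OF ginv_Gt[OF g] yL])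
  obtain z1 a1 r1 where t: "tact (ginv (zg, ag, rg)) (z, b, s) = (z1, a1, r1)" by (cases "tact (ginv (zg, ag, rg)) (z, b, s)") auto
  have a1: "a1 = b - ag + Arg ((complex_of_real s * cis b - cnj x * z) / (complex_of_real s * cis b))"
    using tact_ginv_explicit(1)[OF g zx s, where z=z and b=b] t by simp
  have r1: "r1 = rg * cmod (complex_of_real s * cis b - cnj x * z)"
    using tact_ginv_explicit(2)[OF g zx s, where z=z and b=b] t by simp
  have "cmod z1 < r1" using inL t by (simp add: Lt_iff)
  then have "\<not> 1 < r1 * cos a1" using nA t ang a1 by (simp add: A0_def SetT_iff)
  then show ?thesis using a1 r1 by simp
qed



lemma cis_shift: "cis (x + 2 * pi * of_int n) = cis x"
proof -
  have e: "cis (2 * pi * of_int n) = 1" by (rule cis_multiple_2pi) simp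
  show ?thesis by (metis e cis_mult mult_1_right)
qed

definition rot :: "real \<Rightarrow> complex \<times> real \<times> real" where "rot t = (0, t, 1)"

lemma rot_Gt: "rot t \<in> Gt" by (simp add: rot_def Gt_iff)

lemma tact_g_rot: "0 < rg \<Longrightarrow> tact (zg, ag, rg) (rot t) = (zg * cis t, ag + t, rg)"
  by (simp add: rot_def tact_eq cis_mult norm_mult)

lemma tact_rot_g: "0 < s \<Longrightarrow> tact (rot t) (z, b, s) = (cis (- t) * z, t + b, s)"
  by (simp add: rot_def tact_eq cis_mult norm_mult)

lemma tact_rot_rot: "tact (rot t1) (rot t2) = rot (t1 + t2)"
  by (simp add: rot_def tact_eq cis_mult norm_mult)

lemma ginv_rot: "ginv (rot t) = rot (-t)" by (simp add: rot_def)

lemma unitG_rot: "unitG = rot 0" by (simp add: rot_def unitG_def)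

lemma ds_sub: "discrete_subgroup \<Gamma> \<Longrightarrow> \<Gamma> \<subseteq> Gt" by (simp add: discrete_subgroup_def)
lemma ds_unit: "discrete_subgroup \<Gamma> \<Longrightarrow> unitG \<in> \<Gamma>" by (simp add: discrete_subgroup_def)
lemma ds_mult: "discrete_subgroup \<Gamma> \<Longrightarrow> g \<in> \<Gamma> \<Longrightarrow> h \<in> \<Gamma> \<Longrightarrow> tact g h \<in> \<Gamma>"
  by (simp add: discrete_subgroup_def)

lemma ds_inv:
  assumes ds: "discrete_subgroup \<Gamma>" and g: "g \<in> \<Gamma>"
  shows "ginv g \<in> \<Gamma>"
proof -
  obtain h where h: "h \<in> \<Gamma>" "tact g h = unitG" using ds g by (auto simp: discrete_subgroup_def)
  have gG: "g \<in> Gt" using ds g ds_sub by blast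
  have hL: "h \<in> Lt" using ds h ds_sub Gt_Lt by blast
  have "h = tact (ginv g) (tact g h)" using tact_inv[OF gG hL] by simp
  also have "\<dots> = ginv g" using h(2) tact_unit_Gt[OF ginv_Gt[OF gG]] by simp
  finally show ?thesis using h by simp
qed

definition Th :: "(complex \<times> real \<times> real) set \<Rightarrow> real set" where
  "Th \<Gamma> = {t. rot t \<in> \<Gamma>}"

lemma Th_add: "discrete_subgroup \<Gamma> \<Longrightarrow> a \<in> Th \<Gamma> \<Longrightarrow> b \<in> Th \<Gamma> \<Longrightarrow> a + b \<in> Th \<Gamma>"
  unfolding Th_def using ds_mult tact_rot_rot by (metis mem_Collect_eq)

lemma Th_neg: "discrete_subgroup \<Gamma> \<Longrightarrow> a \<in> Th \<Gamma> \<Longrightarrow> - a \<in> Th \<Gamma>"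
  unfolding Th_def using ds_inv ginv_rot by (metis mem_Collect_eq)

lemma Th_0: "discrete_subgroup \<Gamma> \<Longrightarrow> 0 \<in> Th \<Gamma>"
  unfolding Th_def using ds_unit unitG_rot by (metis mem_Collect_eq)

lemma Th_diff: "discrete_subgroup \<Gamma> \<Longrightarrow> a \<in> Th \<Gamma> \<Longrightarrow> b \<in> Th \<Gamma> \<Longrightarrow> a - b \<in> Th \<Gamma>"
  using Th_add Th_neg by (metis diff_conv_add_uminus)

lemma Th_nat: "discrete_subgroup \<Gamma> \<Longrightarrow> a \<in> Th \<Gamma> \<Longrightarrow> of_nat n * a \<in> Th \<Gamma>"
proof (induction n)
  case 0 then show ?case using Th_0 by simp
next
  case (Suc n)
  then have "a + of_nat n * a \<in> Th \<Gamma>" using Th_add by blast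
  then show ?case by (simp add: algebra_simps)
qed

lemma Th_int: "discrete_subgroup \<Gamma> \<Longrightarrow> a \<in> Th \<Gamma> \<Longrightarrow> of_int n * a \<in> Th \<Gamma>"
proof (cases "n \<ge> 0")
  case True
  assume ds: "discrete_subgroup \<Gamma>" and a: "a \<in> Th \<Gamma>"
  have "of_nat (nat n) * a \<in> Th \<Gamma>" by (rule Th_nat[OF ds a])
  then show ?thesis using True by simp
next
  case False
  assume ds: "discrete_subgroup \<Gamma>" and a: "a \<in> Th \<Gamma>"
  have "- (of_nat (nat (- n)) * a) \<in> Th \<Gamma>" by (rule Th_neg[OF ds Th_nat[OF ds a]])
  then show ?thesis using False by simp
qed

lemma stab_rot:
  assumes ds: "discrete_subgroup \<Gamma>" and g: "g \<in> \<Gamma>" and m: "moeb g 0 = 0"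
  shows "g = rot (fst (snd g))"
proof -
  obtain zg ag rg where gg: "g = (zg, ag, rg)" by (cases g) auto
  have gG: "(zg, ag, rg) \<in> Gt" using ds g ds_sub gg by blast
  have rg: "0 < rg" "(cmod zg)^2 = rg^2 - 1" using gG by (auto simp: Gt_iff)
  have "zg / (complex_of_real rg * cis ag) = 0" using m moeb_0[OF rg(1)] gg by simp
  then have z0: "zg = 0" using rg by simp
  then have "rg^2 = 1" using rg by simp
  then have "rg = 1" using rg by (simp add: power2_eq_1_iff)
  then show ?thesis using gg z0 by (simp add: rot_def)
qed

lemma moeb_rot: "moeb (rot t) = (\<lambda>\<zeta>. if cmod \<zeta> < 1 then cis (- 2 * t) * \<zeta> else 0)"
proof (rule ext)
  fix \<zeta> :: complex
  have "cis (- t) * \<zeta> / cis t = cis (- 2 * t) * \<zeta>"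
  proof -
    have "cis (- t) / cis t = cis (- 2 * t)" by (simp add: cis_divide)
    then show ?thesis by (metis times_divide_eq_left mult.commute)
  qed
  then show "moeb (rot t) \<zeta> = (if cmod \<zeta> < 1 then cis (- 2 * t) * \<zeta> else 0)"
    by (simp add: moeb_def rot_def cis_cnj)
qed

lemma moeb_rot_shift: "moeb (rot (t + of_int m * pi)) = moeb (rot t)"
proof -
  have "cis (- 2 * (t + of_int m * pi)) = cis (- 2 * t + 2 * pi * of_int (- m))"
    by (simp add: algebra_simps)
  also have "\<dots> = cis (- 2 * t)" by (rule cis_shift)
  finally have e: "cis (- 2 * (t + of_int m * pi)) = cis (- 2 * t)" .
  show ?thesis unfolding moeb_rot e ..
qed

lemma centre_rot:
  assumes c: "c \<in> centre" shows "c = rot (fst (snd c))"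
proof -
  obtain zc ac rc where cc: "c = (zc, ac, rc)" by (cases c) auto
  have cG: "(zc, ac, rc) \<in> Gt" and comm: "tact c (rot (pi/2)) = tact (rot (pi/2)) c"
    using c cc rot_Gt by (auto simp: centre_def)
  have rc: "0 < rc" "(cmod zc)^2 = rc^2 - 1" using cG by (auto simp: Gt_iff)
  have "zc * cis (pi/2) = cis (- (pi/2)) * zc"
    using comm unfolding cc tact_g_rot[OF rc(1)] tact_rot_g[OF rc(1)] by simp
  then have "zc * \<i> = - \<i> * zc" by simp
  then have z0: "zc = 0" by simp
  then have "rc^2 = 1" using rc by simp
  then have "rc = 1" using rc by (simp add: power2_eq_1_iff)
  then show ?thesis using cc z0 by (simp add: rot_def)
qed

lemma rot_npi_centre: "rot (of_int n * pi) \<in> centre"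
proof -
  have "tact (rot (of_int n * pi)) g = tact g (rot (of_int n * pi))" if g: "g \<in> Gt" for g
  proof -
    obtain zg ag rg where gg: "g = (zg, ag, rg)" by (cases g) auto
    have rg: "0 < rg" using g gg by (simp add: Gt_iff)
    have "cis (- (of_int n * pi)) = cis (of_int n * pi)"
    proof -
      have "cis (of_int n * pi) = cis (- (of_int n * pi) + 2 * pi * of_int n)" by (simp add: algebra_simps)
      also have "\<dots> = cis (- (of_int n * pi))" by (rule cis_shift)
      finally show ?thesis by simp
    qed
    then show ?thesis unfolding gg tact_g_rot[OF rg] tact_rot_g[OF rg] by (simp add: mult.commute)
  qed
  then show ?thesis unfolding centre_def using rot_Gt by auto
qed

lemma level_jpi:
  assumes ds: "discrete_subgroup \<Gamma>" and k: "level \<Gamma> = k" "0 < k"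
  shows "\<exists>j::nat. 1 \<le> j \<and> j \<le> k \<and> of_nat j * pi \<in> Th \<Gamma>"
proof -
  define Cos where "Cos = {(\<lambda>h. tact c h) ` (\<Gamma> \<inter> centre) | c. c \<in> centre}"
  have cardC: "card Cos = k" using k unfolding Cos_def level_def by simp
  then have finC: "finite Cos" using k card.infinite by fastforce
  define \<phi> where "\<phi> n = (\<lambda>h. tact (rot (of_nat n * pi)) h) ` (\<Gamma> \<inter> centre)" for n :: nat
  have im: "\<phi> ` {0..k} \<subseteq> Cos"
  proof
    fix X assume "X \<in> \<phi> ` {0..k}"
    then obtain n where "X = \<phi> n" by auto
    moreover have "rot (of_nat n * pi) \<in> centre" using rot_npi_centre[of "int n"] by simp
    ultimately show "X \<in> Cos" unfolding Cos_def \<phi>_def by blast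
  qed
  have "\<not> inj_on \<phi> {0..k}"
  proof
    assume "inj_on \<phi> {0..k}"
    then have "card {0..k} \<le> card Cos" using card_inj_on_le[OF _ im finC] by blast
    then show False using cardC by simp
  qed
  then obtain n m where nm: "n \<in> {0..k}" "m \<in> {0..k}" "n \<noteq> m" "\<phi> n = \<phi> m"
    unfolding inj_on_def by blast
  have gen: "of_nat j * pi \<in> Th \<Gamma>" if "\<phi> a = \<phi> b" "a < b" "j = b - a" for a b j
  proof -
    have uc: "unitG \<in> \<Gamma> \<inter> centre" using ds_unit[OF ds] rot_npi_centre[of 0] unitG_rot by simp
    have "rot (of_nat b * pi) = tact (rot (of_nat b * pi)) unitG" using tact_unit_Gt[OF rot_Gt] by simp
    then have "rot (of_nat b * pi) \<in> \<phi> b" unfolding \<phi>_def using uc by blast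
    then have "rot (of_nat b * pi) \<in> \<phi> a" using that by simp
    then obtain h where h: "h \<in> \<Gamma>" "h \<in> centre" "rot (of_nat b * pi) = tact (rot (of_nat a * pi)) h"
      unfolding \<phi>_def by blast
    have hr: "h = rot (fst (snd h))" by (rule centre_rot[OF h(2)])
    have "rot (of_nat b * pi) = rot (of_nat a * pi + fst (snd h))"
      using h(3) hr tact_rot_rot by metis
    then have "fst (snd h) = of_nat b * pi - of_nat a * pi" by (simp add: rot_def)
    also have "\<dots> = of_nat j * pi" using that by (simp add: of_nat_diff algebra_simps)
    finally show ?thesis using h(1) hr unfolding Th_def by (metis mem_Collect_eq)
  qed
  show ?thesis
  proof (cases "n < m")
    case True
    then show ?thesis using gen[OF nm(4) True refl] nm by (intro exI[of _ "m - n"]) auto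
  next
    case False
    then have "m < n" using nm by simp
    then show ?thesis using gen[OF nm(4)[symmetric] \<open>m < n\<close> refl] nm by (intro exI[of _ "n - m"]) auto
  qed
qed



lemma small_rot:
  assumes ds: "discrete_subgroup \<Gamma>" and k: "level \<Gamma> = k" "0 < k"
    and p: "card {moeb g | g. g \<in> \<Gamma> \<and> moeb g 0 = 0} = p" "p > k"
  shows "\<exists>\<theta>\<in>Th \<Gamma>. 0 < \<theta> \<and> \<theta> < pi"
proof (rule ccontr)
  assume no: "\<not> (\<exists>\<theta>\<in>Th \<Gamma>. 0 < \<theta> \<and> \<theta> < pi)"
  obtain j :: nat where j: "1 \<le> j" "j \<le> k" "of_nat j * pi \<in> Th \<Gamma>" using level_jpi[OF ds k] by blast
  have sep: "a = b" if "a \<in> Th \<Gamma>" "b \<in> Th \<Gamma>" "\<bar>a - b\<bar> < pi" for a b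
  proof (rule ccontr)
    assume "a \<noteq> b"
    then consider "a > b" | "b > a" by linarith
    then show False
    proof cases
      case 1 then show False using no Th_diff[OF ds that(1,2)] that(3) by auto
    next
      case 2 then show False using no Th_diff[OF ds that(2,1)] that(3) by auto
    qed
  qed
  define Fin where "Fin = Th \<Gamma> \<inter> {0..<of_nat j * pi}"
  define fl where "fl t = nat \<lfloor>t / pi\<rfloor>" for t
  have inj: "inj_on fl Fin"
  proof (rule inj_onI)
    fix a b assume a: "a \<in> Fin" and b: "b \<in> Fin" and e: "fl a = fl b"
    have "0 \<le> a / pi" "0 \<le> b / pi" using a b by (auto simp: Fin_def)
    then have "0 \<le> \<lfloor>a / pi\<rfloor>" "0 \<le> \<lfloor>b / pi\<rfloor>" by simp_all
    then have "\<lfloor>a / pi\<rfloor> = \<lfloor>b / pi\<rfloor>" using e unfolding fl_def by (metis nat_eq_iff2)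
    then have "\<bar>a / pi - b / pi\<bar> < 1" by linarith
    then have "\<bar>a - b\<bar> / pi < 1" by (simp add: diff_divide_distrib[symmetric])
    then have "\<bar>a - b\<bar> < pi" by (simp add: divide_less_eq)
    then show "a = b" using sep a b by (auto simp: Fin_def)
  qed
  have img: "fl ` Fin \<subseteq> {0..<j}"
  proof
    fix n assume "n \<in> fl ` Fin"
    then obtain t where t: "t \<in> Fin" "n = fl t" by auto
    have "0 \<le> t / pi" "t / pi < of_nat j" using t by (auto simp: Fin_def divide_less_eq)
    then have "\<lfloor>t / pi\<rfloor> < int j" by linarith
    then have "nat \<lfloor>t / pi\<rfloor> < nat (int j)" using j(1) by (subst zless_nat_conj) simp
    then have "nat \<lfloor>t / pi\<rfloor> < j" by simp
    then show "n \<in> {0..<j}" using t unfolding fl_def by auto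
  qed
  have finF: "finite Fin" using inj img finite_subset[OF img] by (metis finite_atLeastLessThan finite_imageD)
  have cardF: "card Fin \<le> j" using card_inj_on_le[OF inj img] by simp
  define M where "M = {moeb g | g. g \<in> \<Gamma> \<and> moeb g 0 = 0}"
  have MS: "M \<subseteq> (\<lambda>t. moeb (rot t)) ` Fin"
  proof
    fix f assume "f \<in> M"
    then obtain g where g: "g \<in> \<Gamma>" "moeb g 0 = 0" "f = moeb g" unfolding M_def by blast
    define a where "a = fst (snd g)"
    have gr: "g = rot a" unfolding a_def by (rule stab_rot[OF ds g(1,2)])
    have aT: "a \<in> Th \<Gamma>" using g(1) gr unfolding Th_def by simp
    define m where "m = \<lfloor>a / (of_nat j * pi)\<rfloor>"
    define t where "t = a + of_int (- m) * (of_nat j * pi)"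
    have jp: "0 < of_nat j * pi" using j by simp
    have tT: "t \<in> Th \<Gamma>" unfolding t_def by (rule Th_add[OF ds aT Th_int[OF ds j(3)]])
    have "of_int m \<le> a / (of_nat j * pi)" "a / (of_nat j * pi) < of_int m + 1" unfolding m_def by linarith+
    then have "of_int m * (of_nat j * pi) \<le> a" "a < (of_int m + 1) * (of_nat j * pi)"
      using jp by (simp_all add: field_simps)
    then have "0 \<le> t" "t < of_nat j * pi" unfolding t_def by (simp_all add: algebra_simps)
    then have tF: "t \<in> Fin" using tT by (simp add: Fin_def)
    have "a = t + of_int (m * int j) * pi" unfolding t_def by (simp add: algebra_simps)
    then have "moeb (rot a) = moeb (rot t)" using moeb_rot_shift by metis
    then show "f \<in> (\<lambda>t. moeb (rot t)) ` Fin" using g(3) gr tF by auto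
  qed
  have "card M \<le> card ((\<lambda>t. moeb (rot t)) ` Fin)" by (rule card_mono[OF finite_imageI[OF finF] MS])
  also have "\<dots> \<le> card Fin" by (rule card_image_le[OF finF])
  finally have "card M \<le> j" using cardF by simp
  then show False using p j unfolding M_def by simp
qed



lemma shift_T:
  assumes ds: "discrete_subgroup \<Gamma>" and g: "g \<in> \<Gamma>" and t: "t \<in> Th \<Gamma>"
  shows "tact g (rot t) \<in> \<Gamma>" "moeb (tact g (rot t)) 0 = moeb g 0"
    "snd (snd (tact g (rot t))) = snd (snd g)" "fst (snd (tact g (rot t))) = fst (snd g) + t"
proof -
  show "tact g (rot t) \<in> \<Gamma>" using ds_mult[OF ds g] t by (simp add: Th_def)
  obtain zg ag rg where gg: "g = (zg, ag, rg)" by (cases g) auto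
  have rg: "0 < rg" using ds_sub[OF ds] g gg by (auto simp: Gt_iff)
  have e: "tact g (rot t) = (zg * cis t, ag + t, rg)" unfolding gg by (rule tact_g_rot[OF rg])
  show "snd (snd (tact g (rot t))) = snd (snd g)" "fst (snd (tact g (rot t))) = fst (snd g) + t"
    using e by (simp_all add: gg)
  have "zg * cis t / (complex_of_real rg * cis (ag + t)) = zg / (complex_of_real rg * cis ag)"
    by (simp add: cis_mult[symmetric] field_simps)
  then show "moeb (tact g (rot t)) 0 = moeb g 0" using e by (simp add: gg moeb_0[OF rg])
qed

lemma ginv_fun: "ginv = (\<lambda>g. (- fst g, - fst (snd g), snd (snd g)))"
  by (rule ext) (auto simp: ginv_def split: prod.splits)

lemma cont_F:
  assumes gs: "gs \<in> Gt"
  shows "continuous (at (gs, gs)) (\<lambda>p. tact (ginv (fst p)) (snd p))"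
proof -
  have o: "open (Lt \<times> Lt)" using open_Lt by (rule open_Times) (rule open_Lt)
  have in1: "(ginv gs, gs) \<in> Lt \<times> Lt" using gs ginv_Gt Gt_Lt by blast
  have c1: "continuous (at (ginv gs, gs)) (\<lambda>q. tact (fst q) (snd q))"
    using cont_tact_joint o in1 continuous_on_eq_continuous_at by blast
  have c2: "continuous (at (gs, gs)) (\<lambda>p::(complex \<times> real \<times> real) \<times> (complex \<times> real \<times> real). (ginv (fst p), snd p))"
    unfolding ginv_fun by (intro continuous_intros)
  have "continuous (at (gs, gs)) ((\<lambda>q. tact (fst q) (snd q)) \<circ> (\<lambda>p. (ginv (fst p), snd p)))"
    using continuous_at_compose[OF c2] c1 by simp
  then show ?thesis by (simp add: o_def)
qed

lemma finite_orbit_bounded: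
  assumes ds: "discrete_subgroup \<Gamma>" and th: "0 < \<theta>"
  shows "finite {x. \<exists>g\<in>\<Gamma>. moeb g 0 = x \<and> snd (snd g) \<le> R \<and> 0 \<le> fst (snd g) \<and> fst (snd g) \<le> \<theta>}"
    (is "finite ?X")
proof (rule ccontr)
  assume inf: "infinite ?X"
  define P where "P x g \<longleftrightarrow> g \<in> \<Gamma> \<and> moeb g 0 = x \<and> snd (snd g) \<le> R \<and> 0 \<le> fst (snd g) \<and> fst (snd g) \<le> \<theta>" for x g
  define sel where "sel x = (SOME g. P x g)" for x
  have selP: "P x (sel x)" if xX: "x \<in> ?X" for x
  proof -
    obtain g where "g \<in> \<Gamma>" "moeb g 0 = x" "snd (snd g) \<le> R" "0 \<le> fst (snd g)" "fst (snd g) \<le> \<theta>"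
      using xX by blast
    then have "P x g" unfolding P_def by blast
    then show ?thesis unfolding sel_def by (rule someI)
  qed
  have inj: "inj_on sel ?X"
  proof (rule inj_onI)
    fix x y assume "x \<in> ?X" "y \<in> ?X" "sel x = sel y"
    then show "x = y" using selP[of x] selP[of y] by (simp add: P_def)
  qed
  define G' where "G' = sel ` ?X"
  have infG: "infinite G'" unfolding G'_def using inf inj finite_imageD by blast
  define K where "K = {p::complex \<times> real \<times> real. cmod (fst p) \<le> R \<and> 0 \<le> fst (snd p) \<and> fst (snd p) \<le> \<theta> \<and>
      1 \<le> snd (snd p) \<and> snd (snd p) \<le> R \<and> (cmod (fst p))^2 = (snd (snd p))^2 - 1}"
  have GK: "G' \<subseteq> K"
  proof
    fix g assume "g \<in> G'"
    then obtain x where x: "x \<in> ?X" "g = sel x" unfolding G'_def by auto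
    have Pg: "P x g" using selP[OF x(1)] x(2) by simp
    obtain z a r where gg: "g = (z, a, r)" by (cases g) auto
    have gG: "(z, a, r) \<in> Gt" using Pg ds_sub[OF ds] gg by (auto simp: P_def)
    then have h: "0 < r" "cmod z < r" "(cmod z)^2 = r^2 - 1" by (auto simp: Gt_iff)
    have "0 \<le> (cmod z)^2" by simp
    then have "1 \<le> r^2" using h(3) by linarith
    then have "1 \<le> r" using power2_le_iff_abs_le[of r 1] h(1) by simp
    then show "g \<in> K" using Pg h gg by (auto simp: P_def K_def)
  qed
  have cK: "compact K"
  proof (rule iffD2[OF compact_eq_bounded_closed], rule conjI)
    show "closed K" unfolding K_def
      by (intro closed_Collect_conj closed_Collect_le closed_Collect_eq continuous_intros)
    show "bounded K" unfolding bounded_iff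
    proof (intro exI ballI)
      fix p assume p: "p \<in> K"
      obtain z a r where pp: "p = (z, a, r)" by (cases p) auto
      have "norm p \<le> norm z + norm (a, r)" unfolding pp by (rule norm_Pair_le)
      also have "norm (a, r) \<le> norm a + norm r" by (rule norm_Pair_le)
      finally show "norm p \<le> R + \<theta> + R" using p pp by (auto simp: K_def)
    qed
  qed
  obtain gs where gs: "gs \<in> K" "gs islimpt G'"
    using cK infG GK unfolding compact_eq_Bolzano_Weierstrass by blast
  have gsG: "gs \<in> Gt"
  proof -
    obtain z a r where pp: "gs = (z, a, r)" by (cases gs) auto
    have h: "1 \<le> r" "(cmod z)^2 = r^2 - 1" using gs(1) pp by (auto simp: K_def)
    then have "(cmod z)^2 < r^2" by simp
    then have "cmod z < r" using h(1) by (simp add: power2_less_imp_less)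
    then show ?thesis using pp h by (simp add: Gt_iff)
  qed
  obtain \<epsilon> where e: "\<epsilon> > 0" "\<And>h. h \<in> \<Gamma> \<Longrightarrow> dist h unitG < \<epsilon> \<Longrightarrow> h = unitG"
    using ds ds_unit[OF ds] unfolding discrete_subgroup_def by blast
  have Fgs: "tact (ginv gs) gs = unitG"
  proof -
    have "tact (ginv gs) (tact gs unitG) = unitG" by (rule tact_inv[OF gsG unitG_Lt])
    then show ?thesis using tact_unit_Gt[OF gsG] by simp
  qed
  obtain \<delta> where d: "\<delta> > 0" "\<And>q. dist q (gs, gs) < \<delta> \<Longrightarrow> dist (tact (ginv (fst q)) (snd q)) unitG < \<epsilon>"
    using cont_F[OF gsG] e(1) unfolding continuous_at_eps_delta by (metis Fgs fst_conv snd_conv)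
  obtain g1 where g1: "g1 \<in> G'" "g1 \<noteq> gs" "dist g1 gs < \<delta>/2"
    using gs(2) d(1) unfolding islimpt_approachable by (metis half_gt_zero)
  have dg1: "0 < dist g1 gs" using g1(2) by simp
  obtain g2 where g2: "g2 \<in> G'" "g2 \<noteq> gs" "dist g2 gs < min (\<delta>/2) (dist g1 gs)"
    using gs(2) d(1) dg1 unfolding islimpt_approachable by (metis half_gt_zero min_less_iff_conj)
  have ne: "g1 \<noteq> g2" using g2(3) by auto
  have "dist (g1, g2) (gs, gs) \<le> dist g1 gs + dist g2 gs"
    unfolding dist_Pair_Pair by (metis sqrt_sum_squares_le_sum_abs abs_of_nonneg zero_le_dist)
  also have "\<dots> < \<delta>" using g1(3) g2(3) by simp
  finally have "dist (tact (ginv g1) g2) unitG < \<epsilon>" using d(2)[of "(g1, g2)"] by simp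
  moreover have g1G: "g1 \<in> \<Gamma>" "g2 \<in> \<Gamma>" using g1(1) g2(1) selP unfolding G'_def P_def by auto
  moreover have "tact (ginv g1) g2 \<in> \<Gamma>" using ds_mult[OF ds ds_inv[OF ds g1G(1)] g1G(2)] .
  ultimately have u: "tact (ginv g1) g2 = unitG" using e(2) by blast
  have g1Gt: "g1 \<in> Gt" using g1G ds_sub[OF ds] by auto
  have g2L: "g2 \<in> Lt" using g1G ds_sub[OF ds] by (intro Gt_Lt) auto
  have "g2 = tact g1 (tact (ginv g1) g2)" using tact_inv[OF ginv_Gt[OF g1Gt] g2L] by simp
  also have "\<dots> = g1" using u tact_unit_Gt[OF g1Gt] by simp
  finally show False using ne by simp
qed



lemma cmod_x_lt1:
  assumes "(zg, ag, rg) \<in> Gt" shows "cmod (moeb (zg, ag, rg) 0) < 1"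
proof -
  have rg: "0 < rg" "cmod zg < rg" using assms by (auto simp: Gt_iff)
  then show ?thesis by (simp add: moeb_0 norm_divide norm_mult)
qed

lemma round_near:
  assumes th: "0 < \<theta>"
  shows "\<bar>c - of_int \<lfloor>c / \<theta> + 1/2\<rfloor> * \<theta>\<bar> \<le> \<theta> / 2"
proof -
  define n where "n = \<lfloor>c / \<theta> + 1/2\<rfloor>"
  have "of_int n \<le> c / \<theta> + 1/2" "c / \<theta> + 1/2 < of_int n + 1" unfolding n_def by linarith+
  then have "\<bar>c / \<theta> - of_int n\<bar> \<le> 1/2" by linarith
  then have "\<bar>(c - of_int n * \<theta>) / \<theta>\<bar> \<le> 1/2" using th by (simp add: diff_divide_distrib)
  then have "\<bar>c - of_int n * \<theta>\<bar> / \<theta> \<le> 1/2" using th by simp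
  then show ?thesis unfolding n_def[symmetric] using th by (simp add: divide_le_eq)
qed

theorem lemma4p2:
  fixes \<Gamma> :: "(complex \<times> real \<times> real) set" and k p :: nat and u :: complex
  assumes "discrete_subgroup \<Gamma>"
    and "level \<Gamma> = k" and "0 < k"
    and "cmod u < 1"
    and "\<exists>g\<in>\<Gamma>. moeb g u = u \<and> moeb g \<noteq> moeb unitG"
    and "card {moeb g | g. g \<in> \<Gamma> \<and> moeb g u = u} = p"
    and "p > k"
    and "u = 0"
  shows "\<forall>y\<in>Lt. \<exists>N. open N \<and> y \<in> N \<and>
           finite {x \<in> (\<lambda>g. moeb g u) ` \<Gamma>. N \<inter> Qset \<Gamma> u x \<noteq> {}}"
proof
  have ds: "discrete_subgroup \<Gamma>" by fact
  have u0: "u = 0" by fact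
  obtain \<theta> where th: "\<theta> \<in> Th \<Gamma>" "0 < \<theta>" "\<theta> < pi"
    using small_rot[OF ds assms(2,3)] assms(6,7) u0 by blast
  fix y0 assume y0: "y0 \<in> Lt"
  obtain z0 b0 s0 where y0e: "y0 = (z0, b0, s0)" by (cases y0) auto
  define m0 where "m0 = s0 - cmod z0"
  have m0: "0 < m0" using y0 y0e by (simp add: Lt_iff m0_def)
  define N where "N = ball y0 (m0 / 4)"
  define \<kappa> where "\<kappa> = cos (\<theta> / 2)"
  have ka: "0 < \<kappa>" unfolding \<kappa>_def using th by (intro cos_gt_zero_pi) auto
  define m where "m = m0 / 2"
  have mp: "0 < m" using m0 by (simp add: m_def)
  define R where "R = 1 / (\<kappa> * m)"
  have sub: "{x \<in> (\<lambda>g. moeb g u) ` \<Gamma>. N \<inter> Qset \<Gamma> u x \<noteq> {}}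
      \<subseteq> {x. \<exists>g\<in>\<Gamma>. moeb g 0 = x \<and> snd (snd g) \<le> R \<and> 0 \<le> fst (snd g) \<and> fst (snd g) \<le> \<theta>}"
  proof
    fix x assume xin: "x \<in> {x \<in> (\<lambda>g. moeb g u) ` \<Gamma>. N \<inter> Qset \<Gamma> u x \<noteq> {}}"
    then obtain g0 where g0: "g0 \<in> \<Gamma>" "x = moeb g0 0" using u0 by auto
    obtain y where y: "y \<in> N" "y \<in> Qset \<Gamma> u x" using xin by auto
    have yH: "y \<in> Hg g" if "g \<in> \<Gamma>" "moeb g 0 = x" for g
    proof -
      have "g \<in> Tset \<Gamma> u x" using that u0 by (simp add: Tset_def)
      then show ?thesis using y(2) unfolding Qset_def by blast
    qed
    obtain zg0 ag0 rg0 where g0e: "g0 = (zg0, ag0, rg0)" by (cases g0) auto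
    have g0G: "(zg0, ag0, rg0) \<in> Gt" using g0 g0e ds_sub[OF ds] by auto
    have rg0: "0 < rg0" using g0G by (simp add: Gt_iff)
    obtain z b s where ye: "y = (z, b, s)" by (cases y) auto
    have yL: "y \<in> Lt" using yH[OF g0(1) g0(2)[symmetric]] by (simp add: Hg_def)
    have sp: "0 < s" using yL ye by (simp add: Lt_iff)
    have dy: "dist y y0 < m0 / 4" using y(1) unfolding N_def by (simp add: dist_commute)
    have d1: "dist z z0 < m0 / 4" using dist_fst_le[of y y0] dy ye y0e by simp
    have d2: "dist s s0 < m0 / 4"
      using dist_snd_le[of "snd y" "snd y0"] dist_snd_le[of y y0] dy ye y0e by simp
    have "cmod z \<le> cmod (z - z0) + cmod z0" by (metis diff_add_cancel norm_triangle_ineq)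
    moreover have "cmod (z - z0) < m0 / 4" using d1 by (simp add: dist_norm)
    ultimately have "cmod z < cmod z0 + m0 / 4" by linarith
    moreover have "s0 - m0 / 4 < s"
    proof -
      have "\<bar>s - s0\<bar> < m0 / 4" using d2 by (simp add: dist_real_def)
      then show ?thesis by linarith
    qed
    ultimately have smz: "m \<le> s - cmod z" unfolding m_def using m0_def by linarith
    have xl1: "cmod x < 1" using cmod_x_lt1[OF g0G] g0(2) g0e by simp
    define Qc where "Qc = (complex_of_real s * cis b - cnj x * z) / (complex_of_real s * cis b)"
    define c where "c = b - ag0 + Arg Qc"
    define n where "n = \<lfloor>c / \<theta> + 1/2\<rfloor>"
    define t where "t = of_int n * \<theta>"
    have tT: "t \<in> Th \<Gamma>" unfolding t_def by (rule Th_int[OF ds th(1)])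
    define g1 where "g1 = tact g0 (rot t)"
    have g1: "g1 \<in> \<Gamma>" "moeb g1 0 = x" "snd (snd g1) = rg0" "fst (snd g1) = ag0 + t"
      using shift_T[OF ds g0(1) tT] g0(2) g0e unfolding g1_def by auto
    obtain zg1 where g1e: "g1 = (zg1, ag0 + t, rg0)" using g1(3,4) by (cases g1) auto
    have g1G: "(zg1, ag0 + t, rg0) \<in> Gt" using g1(1) g1e ds_sub[OF ds] by auto
    have near: "\<bar>c - t\<bar> \<le> \<theta> / 2" unfolding t_def n_def by (rule round_near[OF th(2)])
    have ang: "b - (ag0 + t) + Arg Qc = c - t" unfolding c_def by simp
    have angl: "\<bar>b - (ag0 + t) + Arg Qc\<bar> < pi / 2" unfolding ang using near th(3) by simp
    have kb: "rg0 * cmod (complex_of_real s * cis b - cnj x * z) * cos (c - t) \<le> 1"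
      using key_bound[OF g1G, of z b s x] yH[OF g1(1,2)] g1e g1(2) angl ye
      unfolding ang[symmetric] Qc_def by simp
    have cosb: "\<kappa> \<le> cos (c - t)"
    proof -
      have "cos (\<theta> / 2) \<le> cos \<bar>c - t\<bar>" using near th by (intro cos_monotone_0_pi_le) auto
      then show ?thesis unfolding \<kappa>_def by simp
    qed
    have "cmod (cnj x * z) \<le> cmod z" using xl1 by (simp add: norm_mult mult_left_le_one_le)
    moreover have "cmod (complex_of_real s * cis b) - cmod (cnj x * z) \<le> cmod (complex_of_real s * cis b - cnj x * z)"
      by (rule norm_triangle_ineq2)
    moreover have "cmod (complex_of_real s * cis b) = s" using sp by (simp add: norm_mult)
    ultimately have nb: "m \<le> cmod (complex_of_real s * cis b - cnj x * z)" using smz by linarith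
    have "rg0 * m * \<kappa> \<le> rg0 * cmod (complex_of_real s * cis b - cnj x * z) * cos (c - t)"
      using nb cosb rg0 mp ka by (intro mult_mono) auto
    then have "rg0 * (m * \<kappa>) \<le> 1" using kb by (simp add: mult.assoc)
    then have rgR: "rg0 \<le> R" unfolding R_def using mp ka by (simp add: field_simps)
    define t2 where "t2 = of_int (- \<lfloor>ag0 / \<theta>\<rfloor>) * \<theta>"
    have t2T: "t2 \<in> Th \<Gamma>" unfolding t2_def by (rule Th_int[OF ds th(1)])
    define g2 where "g2 = tact g0 (rot t2)"
    have g2: "g2 \<in> \<Gamma>" "moeb g2 0 = x" "snd (snd g2) = rg0" "fst (snd g2) = ag0 + t2"
      using shift_T[OF ds g0(1) t2T] g0(2) g0e unfolding g2_def by auto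
    have "of_int \<lfloor>ag0 / \<theta>\<rfloor> * \<theta> \<le> ag0" "ag0 < (of_int \<lfloor>ag0 / \<theta>\<rfloor> + 1) * \<theta>"
      using th(2) by (simp_all add: floor_divide_lower floor_divide_upper)
    then have "0 \<le> ag0 + t2" "ag0 + t2 \<le> \<theta>" unfolding t2_def by (simp_all add: algebra_simps)
    then show "x \<in> {x. \<exists>g\<in>\<Gamma>. moeb g 0 = x \<and> snd (snd g) \<le> R \<and> 0 \<le> fst (snd g) \<and> fst (snd g) \<le> \<theta>}"
      using g2 rgR by auto
  qed
  have "finite {x \<in> (\<lambda>g. moeb g u) ` \<Gamma>. N \<inter> Qset \<Gamma> u x \<noteq> {}}"
    by (rule finite_subset[OF sub finite_orbit_bounded[OF ds th(2)]])
  moreover have "open N" "y0 \<in> N" unfolding N_def using m0 by auto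
  ultimately show "\<exists>N. open N \<and> y0 \<in> N \<and> finite {x \<in> (\<lambda>g. moeb g u) ` \<Gamma>. N \<inter> Qset \<Gamma> u x \<noteq> {}}"
    by blast
qed


end
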